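(* Let $N\ge2$, let $(p(n))_{n=1,\dots,N-1}\subseteq[1,\infty)$, let $L\ge2$, $m>0$, and assume that for all $1\le n\le N-1$, $$\inf_{\mathbf x_0\in\mathbb Z^{nd}}\mathbb P\big(\Lambda_L^{(n)}(\mathbf x_0)\text{ is } m\text{-localizing for } H^{(n)}\big)\ge1-L^{-p(n)}.$$ If $\Lambda_L^{(N)}(\mathbf x)$ is partially interactive, then $$\mathbb P\big(\Lambda_L^{(N)}(\mathbf x)\text{ is } m\text{-localizing for } H^{(N)}\big)\ge1-L^{-\widetilde p(N)},\qquad \widetilde p(N):=\min_{1\le n\le N-1}p(n)-\frac{\log 2}{\log L}.$$
   Context: Fix $\tau\in(0,1)$ (a fixed parameter of the paper). Let $d\ge1$. For $n\ge1$, points of $\mathbb Z^{nd}$ are $\mathbf x=(x_1,\dots,x_n)$, $x_j\in\mathbb Z^d$; $d_S(\mathbf x,\mathbf y)=\min_{\pi\in S_n}\|\mathbf x-\pi\mathbf y\|_\infty$ with $\pi\mathbf y=(y_{\pi(1)},\dots,y_{\pi(n)})$; $\Lambda_L^{(n)}(\mathbf a)=\{\mathbf x\in\mathbb Z^{nd}:d_S(\mathbf x,\mathbf a)\le L\}$. Random potential: $\mathcal V=\{\mathcal V(u)\}_{u\in\mathbb Z^d}$ i.i.d. with density $\rho$ supported in $[0,v_{\max}]$, bounded above and below by positive constants on $[0,v_{\max}]$, continuously differentiable on $(0,v_{\max})$ with bounded derivative. Interaction $\mathcal U:\mathbb Z^d\to\mathbb R$ finitely supported, $\lambda>0$. $H^{(n)}=-\Delta^{(n)}+\lambda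 V+U$ on $\ell^2(\mathbb Z^{nd})$, $(\Delta^{(n)}\varphi)(\mathbf x)=\sum_{\|\mathbf y-\mathbf x\|_1=1}\varphi(\mathbf y)$, $V(\mathbf x)=\sum_{j=1}^n\mathcal V(x_j)$, $U(\mathbf x)=\sum_{1\le i<j\le n}\mathcal U(x_i-x_j)$ (same $\mathcal V,\mathcal U,\lambda$ for all $n$); $H_\Theta=1_\Theta H1_\Theta$ on $\ell^2(\Theta)$. Localizing: for a cube $\Lambda_L$, $\varphi\in\ell^2(\Lambda_L)$ is $(\mathbf x,m)$-localizing if $\|\varphi\|_2=1$ and $|\varphi(\mathbf y)|\le e^{-md_S(\mathbf y,\mathbf x)}$ for all $\mathbf y\in\Lambda_L$ with $d_S(\mathbf y,\mathbf x)\ge L^\tau$; $m$-localizing if this holds for some $\mathbf x\in\Lambda_L$; $\Lambda_L$ is $m$-localizing for $H$ if $H_{\Lambda_L}$ has an orthonormal eigenbasis (with multiplicity) of $m$-localizing functions. Partially interactive: with $C_{\mathcal U}=\max_{u\in\operatorname{supp}\mathcal U}\|u\|+1$, a cube $\Lambda_L^{(N)}(\mathbf x)$ is partially interactive if there exist $1\le N_1,N_2<N$ with $N_1+N_2=N$ and disjoint $\mathcal S_1,\mathcal S_2\subseteq\mathbb Z^d$ with $\operatorname{dist}(\mathcal S_1,\mathcal S_2)\ge C_{\mathcal U}$ such that every $\mathbf y\in\Lambda_L^{(N)}(\mathbf x)$ has $\#\{j:y_j\in\mathcal S_1\}=N_1$ and $\#\{j:y_j\in\mathcal S_2\}=N_2$.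 *)

theory Defs
  imports "HOL-Probability.Probability" "HOL-Combinatorics.Permutations"
begin

(* Sites of Z^d are  int ^ 'd  (d = CARD('d) >= 1, arbitrary finite index type).
   An n-particle configuration x = (x_1,...,x_n) in Z^{nd} is a list of sites of length n. *)
type_synonym 'd site = "int ^ 'd"
type_synonym 'd config = "'d site list"

definition site_norm :: "'d::finite site \<Rightarrow> int" where
  "site_norm u = Max (range (\<lambda>i. \<bar>u $ i\<bar>))"

definition linf_dist :: "'d::finite config \<Rightarrow> 'd config \<Rightarrow> int" where
  "linf_dist x y = Max (insert 0 {site_norm (x ! j - y ! j) | j. j < length x})"

definition l1_dist :: "'d::finite config \<Rightarrow> 'd config \<Rightarrow> int" where
  "l1_dist x y = (\<Sum>j<length x. \<Sum>i\<in>UNIV. \<bar>(x ! j) $ i - (y ! j) $ i\<bar>)"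

definition dS :: "'d::finite config \<Rightarrow> 'd config \<Rightarrow> int" where
  "dS x y = Min {linf_dist x (permute_list \<pi> y) | \<pi>. \<pi> permutes {..<length y}}"

definition cube :: "nat \<Rightarrow> real \<Rightarrow> 'd::finite config \<Rightarrow> 'd config set" where
  "cube n L a = {x. length x = n \<and> real_of_int (dS x a) \<le> L}"

definition pot :: "('d::finite site \<Rightarrow> real) \<Rightarrow> 'd config \<Rightarrow> real" where
  "pot V x = (\<Sum>j<length x. V (x ! j))"

definition inter :: "('d::finite site \<Rightarrow> real) \<Rightarrow> 'd config \<Rightarrow> real" where
  "inter U x = (\<Sum>j<length x. \<Sum>i<j. U (x ! i - x ! j))"

(* (H_Theta phi)(x) with H = -Delta + lam V + U and H_Theta = 1_Theta H 1_Theta,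
   phi a function on configurations (only its values on Theta matter) *)
definition ham_restr ::
  "real \<Rightarrow> ('d::finite site \<Rightarrow> real) \<Rightarrow> ('d site \<Rightarrow> real) \<Rightarrow> 'd config set
    \<Rightarrow> ('d config \<Rightarrow> complex) \<Rightarrow> 'd config \<Rightarrow> complex" where
  "ham_restr lam V U \<Theta> \<phi> x =
     (if x \<in> \<Theta> then
        - (\<Sum>y\<in>{y\<in>\<Theta>. length y = length x \<and> l1_dist y x = 1}. \<phi> y)
        + complex_of_real (lam * pot V x + inter U x) * \<phi> x
      else 0)"

definition localizing_at ::
  "real \<Rightarrow> real \<Rightarrow> real \<Rightarrow> 'd::finite config set \<Rightarrow> ('d config \<Rightarrow> complex) \<Rightarrow> 'd config \<Rightarrow> bool" where
  "localizing_at \<tau> L m \<Lambda> \<phi> x \<longleftrightarrow>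
     sqrt (\<Sum>y\<in>\<Lambda>. (cmod (\<phi> y))\<^sup>2) = 1 \<and>
     (\<forall>y\<in>\<Lambda>. real_of_int (dS y x) \<ge> L powr \<tau> \<longrightarrow> cmod (\<phi> y) \<le> exp (- m * real_of_int (dS y x)))"

definition m_localizing_fun ::
  "real \<Rightarrow> real \<Rightarrow> real \<Rightarrow> 'd::finite config set \<Rightarrow> ('d config \<Rightarrow> complex) \<Rightarrow> bool" where
  "m_localizing_fun \<tau> L m \<Lambda> \<phi> \<longleftrightarrow> (\<exists>x\<in>\<Lambda>. localizing_at \<tau> L m \<Lambda> \<phi> x)"

definition m_localizing_cube ::
  "real \<Rightarrow> real \<Rightarrow> real \<Rightarrow> ('d::finite site \<Rightarrow> real) \<Rightarrow> ('d site \<Rightarrow> real)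
    \<Rightarrow> nat \<Rightarrow> real \<Rightarrow> 'd config \<Rightarrow> bool" where
  "m_localizing_cube \<tau> m lam V U n L a \<longleftrightarrow>
     (let \<Lambda> = cube n L a in
      \<exists>B :: ('d config \<Rightarrow> complex) set.
        card B = card \<Lambda> \<and>
        (\<forall>\<phi>\<in>B. \<forall>\<psi>\<in>B. (\<Sum>y\<in>\<Lambda>. \<phi> y * cnj (\<psi> y)) = (if \<phi> = \<psi> then 1 else 0)) \<and>
        (\<forall>\<phi>\<in>B. (\<forall>y. y \<notin> \<Lambda> \<longrightarrow> \<phi> y = 0) \<and>
                 (\<exists>E. \<forall>y\<in>\<Lambda>. ham_restr lam V U \<Lambda> \<phi> y = E * \<phi> y) \<and>
                 m_localizing_fun \<tau> L m \<Lambda> \<phi>))"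

definition C_U :: "('d::finite site \<Rightarrow> real) \<Rightarrow> int" where
  "C_U U = Max (insert 0 (site_norm ` {u. U u \<noteq> 0})) + 1"

definition partially_interactive ::
  "('d::finite site \<Rightarrow> real) \<Rightarrow> nat \<Rightarrow> real \<Rightarrow> 'd config \<Rightarrow> bool" where
  "partially_interactive U N L x \<longleftrightarrow>
     (\<exists>N1 N2 (S1 :: 'd site set) S2.
        1 \<le> N1 \<and> N1 < N \<and> 1 \<le> N2 \<and> N2 < N \<and> N1 + N2 = N \<and>
        S1 \<inter> S2 = {} \<and> (\<forall>a\<in>S1. \<forall>b\<in>S2. C_U U \<le> site_norm (a - b)) \<and>
        (\<forall>y\<in>cube N L x. card {j. j < N \<and> y ! j \<in> S1} = N1 \<and>
                          card {j. j < N \<and> y ! j \<in> S2} = N2))"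

end

theory Submission
  imports Defs
begin

definition enm :: "nat set \<Rightarrow> nat \<Rightarrow> nat" where
  "enm J k = sorted_list_of_set J ! k"

definition rnk :: "nat set \<Rightarrow> nat \<Rightarrow> nat" where
  "rnk J = inv_into {..<card J} (enm J)"

lemma enm_bij: "finite J \<Longrightarrow> bij_betw (enm J) {..<card J} J"
  unfolding enm_def
  by (rule bij_betw_nth) (auto simp: sorted_list_of_set.length_sorted_key_list_of_set)

lemma enm_less: "finite J \<Longrightarrow> k < l \<Longrightarrow> l < card J \<Longrightarrow> enm J k < enm J l"
  unfolding enm_def
  by (rule sorted_wrt_nth_less) (auto simp: sorted_list_of_set.length_sorted_key_list_of_set)

lemma enm_less_iff: "finite J \<Longrightarrow> k < card J \<Longrightarrow> l < card J \<Longrightarrow> enm J k < enm J l \<longleftrightarrow> k < l"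
  by (metis enm_less linorder_neqE_nat not_less_iff_gr_or_eq)

lemma enm_in: "finite J \<Longrightarrow> k < card J \<Longrightarrow> enm J k \<in> J"
  using enm_bij bij_betwE by blast

lemma enm_inj: "finite J \<Longrightarrow> k < card J \<Longrightarrow> l < card J \<Longrightarrow> enm J k = enm J l \<longleftrightarrow> k = l"
  using enm_bij[of J] by (auto simp: bij_betw_def inj_on_def)

lemma rnk_enm: "finite J \<Longrightarrow> k < card J \<Longrightarrow> rnk J (enm J k) = k"
  unfolding rnk_def using enm_bij[of J]
  by (simp add: bij_betw_def inv_into_f_f)

lemma enm_rnk: "finite J \<Longrightarrow> j \<in> J \<Longrightarrow> enm J (rnk J j) = j"
  unfolding rnk_def using enm_bij[of J]
  by (simp add: bij_betw_def f_inv_into_f)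

lemma rnk_less: "finite J \<Longrightarrow> j \<in> J \<Longrightarrow> rnk J j < card J"
  unfolding rnk_def using enm_bij[of J]
  by (metis bij_betwE bij_betw_inv_into lessThan_iff)

lemma sum_enm: "finite J \<Longrightarrow> (\<Sum>j\<in>J. g j) = (\<Sum>k<card J. g (enm J k))"
  using sum.reindex_bij_betw[OF enm_bij[of J], of g] by simp

definition subl :: "nat set \<Rightarrow> 'a list \<Rightarrow> 'a list" where
  "subl J y = map (\<lambda>k. y ! enm J k) [0..<card J]"

definition mrg :: "nat \<Rightarrow> nat set \<Rightarrow> 'a list \<Rightarrow> 'a list \<Rightarrow> 'a list" where
  "mrg N J a b = map (\<lambda>j. if j \<in> J then a ! rnk J j else b ! rnk ({..<N} - J) j) [0..<N]"

lemma length_subl[simp]: "length (subl J y) = card J"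
  by (simp add: subl_def)

lemma subl_nth[simp]: "k < card J \<Longrightarrow> subl J y ! k = y ! enm J k"
  by (simp add: subl_def)

lemma length_mrg[simp]: "length (mrg N J a b) = N"
  by (simp add: mrg_def)

lemma mrg_nth: "j < N \<Longrightarrow> mrg N J a b ! j = (if j \<in> J then a ! rnk J j else b ! rnk ({..<N} - J) j)"
  by (simp add: mrg_def)

lemma mrg_nth1: "J \<subseteq> {..<N} \<Longrightarrow> k < card J \<Longrightarrow> mrg N J a b ! enm J k = a ! k"
proof -
  assume J: "J \<subseteq> {..<N}" and k: "k < card J"
  have f: "finite J" using J finite_subset by blast
  have "enm J k \<in> J" using enm_in[OF f k] .
  then show ?thesis using J f k by (auto simp: mrg_nth rnk_enm)
qed

lemma mrg_nth2: "J \<subseteq> {..<N} \<Longrightarrow> k < card ({..<N} - J) \<Longrightarrow> mrg N J a b ! enm ({..<N} - J) k = b ! k"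
proof -
  assume J: "J \<subseteq> {..<N}" and k: "k < card ({..<N} - J)"
  have f: "finite ({..<N} - J)" by simp
  have "enm ({..<N} - J) k \<in> {..<N} - J" using enm_in[OF f k] .
  then show ?thesis using J f k by (auto simp: mrg_nth rnk_enm)
qed

lemma subl_mrg1: "J \<subseteq> {..<N} \<Longrightarrow> length a = card J \<Longrightarrow> subl J (mrg N J a b) = a"
  by (rule nth_equalityI) (auto simp: mrg_nth1)

lemma subl_mrg2: "J \<subseteq> {..<N} \<Longrightarrow> length b = card ({..<N} - J) \<Longrightarrow> subl ({..<N} - J) (mrg N J a b) = b"
  by (rule nth_equalityI) (auto simp: mrg_nth2)

lemma mrg_subl: "J \<subseteq> {..<N} \<Longrightarrow> length y = N \<Longrightarrow> mrg N J (subl J y) (subl ({..<N} - J) y) = y"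
proof (rule nth_equalityI)
  fix j assume J: "J \<subseteq> {..<N}" and "length y = N" "j < length (mrg N J (subl J y) (subl ({..<N} - J) y))"
  then have j: "j < N" by simp
  have f: "finite J" using J finite_subset by blast
  show "mrg N J (subl J y) (subl ({..<N} - J) y) ! j = y ! j"
  proof (cases "j \<in> J")
    case True
    then show ?thesis using j f by (simp add: mrg_nth rnk_less enm_rnk)
  next
    case False
    then have "j \<in> {..<N} - J" using j by simp
    then show ?thesis using j False by (simp add: mrg_nth rnk_less enm_rnk del: Diff_iff)
  qed
qed simp

lemma card_compl: "J \<subseteq> {..<N} \<Longrightarrow> card ({..<N} - J) = N - card J"
  by (simp add: card_Diff_subset finite_subset)

lemma sum_split_J: "J \<subseteq> {..<N} \<Longrightarrow> (\<Sum>j<N. g j) = (\<Sum>k<card J. g (enm J k)) + (\<Sum>k<card ({..<N} - J). g (enm ({..<N} - J) k))"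
proof -
  assume J: "J \<subseteq> {..<N}"
  have f: "finite J" using J finite_subset by blast
  have "(\<Sum>j<N. g j) = (\<Sum>j\<in>{..<N} - J. g j) + (\<Sum>j\<in>J. g j)"
    by (rule sum.subset_diff[OF J finite_lessThan])
  also have "\<dots> = (\<Sum>k<card J. g (enm J k)) + (\<Sum>k<card ({..<N} - J). g (enm ({..<N} - J) k))"
    using sum_enm[OF f, of g] sum_enm[of "{..<N} - J" g] by (simp add: add.commute)
  finally show ?thesis .
qed

lemma mrg_sum2:
  assumes J: "J \<subseteq> {..<N}" and a: "length a = card J" "length c = card J"
    and b: "length b = card ({..<N} - J)" "length d = card ({..<N} - J)"
  shows "(\<Sum>j<N. h (mrg N J a b ! j) (mrg N J c d ! j)) = (\<Sum>k<length a. h (a!k) (c!k)) + (\<Sum>k<length b. h (b!k) (d!k))"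
proof -
  have "(\<Sum>j<N. h (mrg N J a b ! j) (mrg N J c d ! j)) =
    (\<Sum>k<card J. h (mrg N J a b ! enm J k) (mrg N J c d ! enm J k)) +
    (\<Sum>k<card ({..<N} - J). h (mrg N J a b ! enm ({..<N} - J) k) (mrg N J c d ! enm ({..<N} - J) k))"
    using sum_split_J[OF J, of "\<lambda>j. h (mrg N J a b ! j) (mrg N J c d ! j)"] by simp
  also have "\<dots> = (\<Sum>k<card J. h (a!k) (c!k)) + (\<Sum>k<card ({..<N} - J). h (b!k) (d!k))"
    by (intro arg_cong2[where f="(+)"] sum.cong refl) (simp_all add: mrg_nth1[OF J] mrg_nth2[OF J])
  finally show ?thesis using a b by simp
qed

lemma l1_mrg:
  assumes J: "J \<subseteq> {..<N}" and a: "length a = card J" "length c = card J"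
    and b: "length b = card ({..<N} - J)" "length d = card ({..<N} - J)"
  shows "l1_dist (mrg N J a b) (mrg N J c d) = l1_dist a c + l1_dist b d"
  unfolding l1_dist_def using mrg_sum2[OF assms, of "\<lambda>u w. \<Sum>i\<in>UNIV. \<bar>u $ i - w $ i\<bar>"]
  by simp

lemma pot_mrg:
  assumes J: "J \<subseteq> {..<N}" and a: "length a = card J"
    and b: "length b = card ({..<N} - J)"
  shows "pot V (mrg N J a b) = pot V a + pot V b"
  unfolding pot_def using mrg_sum2[OF J a a b b, of "\<lambda>u w. V u"]
  by simp

definition prs :: "nat \<Rightarrow> (nat \<times> nat) set" where
  "prs n = {(i,j). i < j \<and> j < n}"

lemma finite_prs[simp]: "finite (prs n)"
  by (rule finite_subset[of _ "{..<n} \<times> {..<n}"]) (auto simp: prs_def)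

lemma inter_prs: "inter U y = (\<Sum>p\<in>prs (length y). U (y ! fst p - y ! snd p))"
proof -
  have "inter U y = (\<Sum>(j,i)\<in>Sigma {..<length y} (\<lambda>j. {..<j}). U (y ! i - y ! j))"
    unfolding inter_def by (simp add: sum.Sigma)
  also have "\<dots> = (\<Sum>p\<in>prs (length y). U (y ! fst p - y ! snd p))"
    by (rule sum.reindex_bij_witness[of _ prod.swap prod.swap]) (auto simp: prs_def)
  finally show ?thesis .
qed

lemma sum_prs_enm:
  assumes f: "finite J" and sub: "J \<subseteq> {..<N}"
  shows "(\<Sum>p\<in>{p\<in>prs N. fst p \<in> J \<and> snd p \<in> J}. g p) = (\<Sum>q\<in>prs (card J). g (enm J (fst q), enm J (snd q)))"
proof -
  have A: "(enm J (rnk J (fst p)), enm J (rnk J (snd p))) = p \<and> (rnk J (fst p), rnk J (snd p)) \<in> prs (card J)"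
    if p: "p \<in> {p \<in> prs N. fst p \<in> J \<and> snd p \<in> J}" for p
  proof -
    from p have p1: "fst p \<in> J" "snd p \<in> J" "fst p < snd p" by (auto simp: prs_def)
    have r: "rnk J (fst p) < card J" "rnk J (snd p) < card J" using rnk_less[OF f] p1 by auto
    have "rnk J (fst p) < rnk J (snd p)"
      using enm_less_iff[OF f r] p1 by (simp add: enm_rnk[OF f])
    then show ?thesis using r f p1 by (simp add: prs_def enm_rnk)
  qed
  have B: "(rnk J (enm J (fst q)), rnk J (enm J (snd q))) = q \<and> (enm J (fst q), enm J (snd q)) \<in> {p \<in> prs N. fst p \<in> J \<and> snd p \<in> J}"
    if q: "q \<in> prs (card J)" for q
  proof -
    from q have q1: "fst q < snd q" "snd q < card J" by (auto simp: prs_def)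
    then have q2: "fst q < card J" by simp
    have "enm J (fst q) \<in> J" "enm J (snd q) \<in> J" using enm_in[OF f] q1 q2 by auto
    moreover have "enm J (fst q) < enm J (snd q)" using enm_less[OF f q1] .
    moreover have "enm J (snd q) < N" using \<open>enm J (snd q) \<in> J\<close> sub by auto
    ultimately show ?thesis using f q1 q2 by (simp add: prs_def rnk_enm)
  qed
  show ?thesis
    apply (rule sum.reindex_bij_witness[where j="\<lambda>p. (rnk J (fst p), rnk J (snd p))" and i="\<lambda>q. (enm J (fst q), enm J (snd q))"])
    using A B by auto
qed

lemma inter_mrg:
  assumes J: "J \<subseteq> {..<N}" and a: "length a = card J"
    and b: "length b = card ({..<N} - J)"
    and cross: "\<And>k l. k < card J \<Longrightarrow> l < card ({..<N} - J) \<Longrightarrow> U (a!k - b!l) = 0 \<and> U (b!l - a!k) = 0"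
  shows "inter U (mrg N J a b) = inter U a + inter U b"
proof -
  define y where "y = mrg N J a b"
  define Jc where "Jc = {..<N} - J"
  define g where "g p = U (y ! fst p - y ! snd p)" for p
  have fJ: "finite J" using J finite_subset by blast
  have fJc: "finite Jc" by (simp add: Jc_def)
  have JcN: "Jc \<subseteq> {..<N}" by (auto simp: Jc_def)
  have split: "g p = (if fst p \<in> J \<and> snd p \<in> J then g p else 0) + (if fst p \<in> Jc \<and> snd p \<in> Jc then g p else 0)
     + (if (fst p \<in> J \<and> snd p \<in> Jc) \<or> (fst p \<in> Jc \<and> snd p \<in> J) then g p else 0)" if "p \<in> prs N" for p
    using that by (auto simp: prs_def Jc_def)
  have crossz: "(if (fst p \<in> J \<and> snd p \<in> Jc) \<or> (fst p \<in> Jc \<and> snd p \<in> J) then g p else 0) = 0" for p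
  proof -
    have "g p = 0" if h: "fst p \<in> J" "snd p \<in> Jc"
    proof -
      have "y ! fst p = a ! rnk J (fst p)" "y ! snd p = b ! rnk Jc (snd p)"
        using h J by (auto simp: y_def mrg_nth Jc_def)
      then show ?thesis using cross[of "rnk J (fst p)" "rnk Jc (snd p)"] h fJ fJc rnk_less
        by (simp add: g_def Jc_def)
    qed
    moreover have "g p = 0" if h: "fst p \<in> Jc" "snd p \<in> J"
    proof -
      have "y ! fst p = b ! rnk Jc (fst p)" "y ! snd p = a ! rnk J (snd p)"
        using h J by (auto simp: y_def mrg_nth Jc_def)
      then show ?thesis using cross[of "rnk J (snd p)" "rnk Jc (fst p)"] h fJ fJc rnk_less
        by (simp add: g_def Jc_def)
    qed
    ultimately show ?thesis by auto
  qed
  have "inter U y = (\<Sum>p\<in>prs N. g p)"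
    by (simp add: inter_prs y_def g_def)
  also have "\<dots> = (\<Sum>p\<in>prs N. (if fst p \<in> J \<and> snd p \<in> J then g p else 0)) + (\<Sum>p\<in>prs N. (if fst p \<in> Jc \<and> snd p \<in> Jc then g p else 0))"
    by (subst sum.cong[OF refl split]) (simp_all add: sum.distrib crossz)
  also have "\<dots> = (\<Sum>p\<in>{p\<in>prs N. fst p \<in> J \<and> snd p \<in> J}. g p) + (\<Sum>p\<in>{p\<in>prs N. fst p \<in> Jc \<and> snd p \<in> Jc}. g p)"
    by (simp add: sum.inter_filter)
  also have "\<dots> = (\<Sum>q\<in>prs (card J). g (enm J (fst q), enm J (snd q))) + (\<Sum>q\<in>prs (card Jc). g (enm Jc (fst q), enm Jc (snd q)))"
    using sum_prs_enm[OF fJ J, of g] sum_prs_enm[OF fJc JcN, of g] by (simp only:)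
  also have "\<dots> = inter U a + inter U b"
  proof -
    have "g (enm J (fst q), enm J (snd q)) = U (a ! fst q - a ! snd q)" if "q \<in> prs (card J)" for q
      using that J by (auto simp: g_def y_def mrg_nth1 prs_def)
    moreover have "g (enm Jc (fst q), enm Jc (snd q)) = U (b ! fst q - b ! snd q)" if "q \<in> prs (card Jc)" for q
      using that J by (auto simp: g_def y_def mrg_nth2 prs_def Jc_def)
    ultimately show ?thesis using a b by (simp add: inter_prs Jc_def)
  qed
  finally show ?thesis by (simp add: y_def)
qed

lemma linf_le:
  assumes "length y = n"
  shows "linf_dist y z \<le> r \<longleftrightarrow> 0 \<le> r \<and> (\<forall>j<n. site_norm (y!j - z!j) \<le> r)"
proof -
  have "{site_norm (y ! j - z ! j) |j. j < length y} = (\<lambda>j. site_norm (y ! j - z ! j)) ` {..<n}"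
    using assms by auto
  then show ?thesis unfolding linf_dist_def by (auto simp: assms)
qed

lemma dS_le:
  assumes "length y = n" "length z = n"
  shows "dS y z \<le> r \<longleftrightarrow> 0 \<le> r \<and> (\<exists>f. bij_betw f {..<n} {..<n} \<and> (\<forall>j<n. site_norm (y!j - z!(f j)) \<le> r))"
proof -
  have eq: "{linf_dist y (permute_list \<pi> z) | \<pi>. \<pi> permutes {..<length z}} = (\<lambda>\<pi>. linf_dist y (permute_list \<pi> z)) ` {\<pi>. \<pi> permutes {..<n}}"
    using assms by auto
  have fin: "finite {\<pi>. \<pi> permutes {..<n}}" by (simp add: finite_permutations)
  have ne: "{\<pi>. \<pi> permutes {..<n}} \<noteq> {}" using permutes_id by blast
  have "dS y z \<le> r \<longleftrightarrow> (\<exists>\<pi>. \<pi> permutes {..<n} \<and> linf_dist y (permute_list \<pi> z) \<le> r)"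
    unfolding dS_def eq using fin ne by (auto simp: Min_le_iff)
  also have "\<dots> \<longleftrightarrow> 0 \<le> r \<and> (\<exists>f. bij_betw f {..<n} {..<n} \<and> (\<forall>j<n. site_norm (y!j - z!(f j)) \<le> r))"
  proof
    assume "\<exists>\<pi>. \<pi> permutes {..<n} \<and> linf_dist y (permute_list \<pi> z) \<le> r"
    then obtain \<pi> where p: "\<pi> permutes {..<n}" "linf_dist y (permute_list \<pi> z) \<le> r" by blast
    then show "0 \<le> r \<and> (\<exists>f. bij_betw f {..<n} {..<n} \<and> (\<forall>j<n. site_norm (y!j - z!(f j)) \<le> r))"
      using assms by (auto simp: linf_le permute_list_nth intro!: exI[of _ \<pi>] permutes_imp_bij)
  next
    assume "0 \<le> r \<and> (\<exists>f. bij_betw f {..<n} {..<n} \<and> (\<forall>j<n. site_norm (y!j - z!(f j)) \<le> r))"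
    then obtain f where f: "0 \<le> r" "bij_betw f {..<n} {..<n}" "\<forall>j<n. site_norm (y!j - z!(f j)) \<le> r" by blast
    define \<pi> where "\<pi> = (\<lambda>j. if j < n then f j else j)"
    have "bij_betw \<pi> {..<n} {..<n}" using f(2) by (rule bij_betw_cong[THEN iffD1, rotated]) (simp add: \<pi>_def)
    then have pp: "\<pi> permutes {..<n}" by (rule bij_imp_permutes) (simp add: \<pi>_def)
    have "linf_dist y (permute_list \<pi> z) \<le> r"
      using f assms pp by (auto simp: linf_le permute_list_nth \<pi>_def)
    then show "\<exists>\<pi>. \<pi> permutes {..<n} \<and> linf_dist y (permute_list \<pi> z) \<le> r" using pp by blast
  qed
  finally show ?thesis .
qed

lemma dS_mrg:
  assumes J: "J \<subseteq> {..<N}" and K: "K \<subseteq> {..<N}" and JK: "card J = card K"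
    and la: "length a = card J" "length c = card J"
    and lb: "length b = card ({..<N} - J)" "length d = card ({..<N} - J)"
    and d1: "dS a c \<le> r" and d2: "dS b d \<le> r"
  shows "dS (mrg N J a b) (mrg N K c d) \<le> r"
proof -
  define Jc where "Jc = {..<N} - J"
  define Kc where "Kc = {..<N} - K"
  have fJ: "finite J" "finite K" "finite Jc" "finite Kc" using J K finite_subset by (auto simp: Jc_def Kc_def)
  have cc: "card Jc = card Kc" using J K JK by (simp add: Jc_def Kc_def card_compl)
  obtain f1 where f1: "bij_betw f1 {..<card J} {..<card J}" "\<forall>k<card J. site_norm (a!k - c!(f1 k)) \<le> r" and r0: "0 \<le> r"
    using d1 la dS_le[of a "card J" c r] by auto
  obtain f2 where f2: "bij_betw f2 {..<card Jc} {..<card Jc}" "\<forall>k<card Jc. site_norm (b!k - d!(f2 k)) \<le> r"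
    using d2 lb dS_le[of b "card Jc" d r] by (auto simp: Jc_def)
  define f where "f j = (if j \<in> J then enm K (f1 (rnk J j)) else enm Kc (f2 (rnk Jc j)))" for j
  have f1r: "f1 (rnk J j) < card K" if "j \<in> J" for j
    using f1(1) rnk_less[OF fJ(1) that] JK by (auto dest: bij_betwE)
  have f2r: "f2 (rnk Jc j) < card Kc" if "j \<in> Jc" for j
    using f2(1) rnk_less[OF fJ(3) that] cc by (auto dest: bij_betwE)
  have into: "f j \<in> {..<N}" if "j < N" for j
  proof (cases "j \<in> J")
    case True
    then show ?thesis using enm_in[OF fJ(2) f1r[OF True]] K by (auto simp: f_def)
  next
    case False
    then have "j \<in> Jc" using that by (simp add: Jc_def)
    then show ?thesis using enm_in[OF fJ(4) f2r] False by (auto simp: f_def Kc_def)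
  qed
  have inj: "inj_on f {..<N}"
  proof (rule inj_onI)
    fix i j assume i: "i \<in> {..<N}" and j: "j \<in> {..<N}" and e: "f i = f j"
    show "i = j"
    proof (cases "i \<in> J"; cases "j \<in> J")
      assume "i \<in> J" "j \<in> J"
      then have "f1 (rnk J i) = f1 (rnk J j)" using e enm_inj[OF fJ(2) f1r f1r] by (simp add: f_def)
      then have "rnk J i = rnk J j" using f1(1) rnk_less[OF fJ(1)] \<open>i \<in> J\<close> \<open>j \<in> J\<close>
        by (auto simp: bij_betw_def inj_on_def)
      then show ?thesis using enm_rnk[OF fJ(1)] \<open>i \<in> J\<close> \<open>j \<in> J\<close> by metis
    next
      assume "i \<notin> J" "j \<notin> J"
      then have ij: "i \<in> Jc" "j \<in> Jc" using i j by (auto simp: Jc_def)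
      then have "f2 (rnk Jc i) = f2 (rnk Jc j)" using e enm_inj[OF fJ(4) f2r f2r] \<open>i \<notin> J\<close> \<open>j \<notin> J\<close> by (simp add: f_def)
      then have "rnk Jc i = rnk Jc j" using f2(1) rnk_less[OF fJ(3)] ij
        by (auto simp: bij_betw_def inj_on_def)
      then show ?thesis using enm_rnk[OF fJ(3)] ij by metis
    next
      assume "i \<in> J" "j \<notin> J"
      then have "j \<in> Jc" using j by (auto simp: Jc_def)
      have "f i \<in> K" using enm_in[OF fJ(2) f1r[OF \<open>i \<in> J\<close>]] \<open>i \<in> J\<close> by (simp add: f_def)
      moreover have "f j \<in> Kc" using enm_in[OF fJ(4) f2r[OF \<open>j \<in> Jc\<close>]] \<open>j \<notin> J\<close> by (simp add: f_def)
      ultimately show ?thesis using e by (auto simp: Kc_def)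
    next
      assume "i \<notin> J" "j \<in> J"
      then have "i \<in> Jc" using i by (auto simp: Jc_def)
      have "f j \<in> K" using enm_in[OF fJ(2) f1r[OF \<open>j \<in> J\<close>]] \<open>j \<in> J\<close> by (simp add: f_def)
      moreover have "f i \<in> Kc" using enm_in[OF fJ(4) f2r[OF \<open>i \<in> Jc\<close>]] \<open>i \<notin> J\<close> by (simp add: f_def)
      ultimately show ?thesis using e by (auto simp: Kc_def)
    qed
  qed
  have bij: "bij_betw f {..<N} {..<N}"
    unfolding bij_betw_def using inj into endo_inj_surj[of "{..<N}" f] by auto
  have bound: "site_norm (mrg N J a b ! j - mrg N K c d ! f j) \<le> r" if "j < N" for j
  proof (cases "j \<in> J")
    case True
    have "mrg N J a b ! j = a ! rnk J j" using True that by (simp add: mrg_nth)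
    moreover have "mrg N K c d ! f j = c ! f1 (rnk J j)"
      using True mrg_nth1[OF K f1r[OF True]] by (simp add: f_def)
    ultimately show ?thesis using f1(2) rnk_less[OF fJ(1) True] by simp
  next
    case False
    then have "j \<in> Jc" using that by (simp add: Jc_def)
    have "mrg N J a b ! j = b ! rnk Jc j" using False that by (simp add: mrg_nth Jc_def)
    moreover have "mrg N K c d ! f j = d ! f2 (rnk Jc j)"
      using False mrg_nth2[OF K f2r[OF \<open>j \<in> Jc\<close>, unfolded Kc_def]] by (simp add: f_def Kc_def)
    ultimately show ?thesis using f2(2) rnk_less[OF fJ(3) \<open>j \<in> Jc\<close>] by simp
  qed
  have "0 \<le> r \<and> (\<exists>f. bij_betw f {..<N} {..<N} \<and> (\<forall>j<N. site_norm (mrg N J a b ! j - mrg N K c d ! f j) \<le> r))"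
    using r0 bij bound by blast
  moreover have LL: "length (mrg N J a b) = N" "length (mrg N K c d) = N" by simp_all
  ultimately show ?thesis by (subst dS_le[OF LL]) 
qed

lemma site_norm_zero[simp]: "site_norm 0 = 0"
  by (simp add: site_norm_def)

lemma site_norm_nonneg: "0 \<le> site_norm u"
proof -
  obtain i :: 'a where True by blast
  have "\<bar>u $ i\<bar> \<le> site_norm u" unfolding site_norm_def by (rule Max_ge) auto
  then show ?thesis by linarith
qed

lemma site_norm_ge: "\<bar>u $ i\<bar> \<le> site_norm u"
  unfolding site_norm_def by (rule Max_ge) auto

lemma site_norm_minus: "site_norm (a - b) = site_norm (b - a)"
proof -
  have "range (\<lambda>i. \<bar>(a - b) $ i\<bar>) = range (\<lambda>i. \<bar>(b - a) $ i\<bar>)" by (simp add: abs_minus_commute)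
  then show ?thesis by (simp add: site_norm_def)
qed

lemma dS_refl: "0 \<le> r \<Longrightarrow> dS y y \<le> r"
  using dS_le[of y "length y" y r] by (auto intro!: exI[of _ id])

lemma in_cube_self: "0 \<le> L \<Longrightarrow> a \<in> cube (length a) L a"
  using dS_refl[of "\<lfloor>L\<rfloor>" a] by (simp add: cube_def) (smt (verit, best) dS_refl of_int_le_iff le_floor_iff)

lemma l1_term_nonneg: "0 \<le> (\<Sum>i\<in>UNIV. \<bar>(u::'d::finite site) $ i - v $ i\<bar>)"
  by (simp add: sum_nonneg)

lemma l1_term_pos: "(u::'d::finite site) \<noteq> v \<Longrightarrow> 1 \<le> (\<Sum>i\<in>UNIV. \<bar>u $ i - v $ i\<bar>)"
proof -
  assume "u \<noteq> v"
  then obtain i where i: "u $ i \<noteq> v $ i" by (metis vec_eq_iff)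
  have "1 \<le> \<bar>u $ i - v $ i\<bar>" using i by linarith
  also have "\<dots> \<le> (\<Sum>i\<in>UNIV. \<bar>u $ i - v $ i\<bar>)" by (rule member_le_sum) auto
  finally show ?thesis .
qed

lemma l1_term_zero: "(\<Sum>i\<in>UNIV. \<bar>(u::'d::finite site) $ i - v $ i\<bar>) = 0 \<longleftrightarrow> u = v"
proof
  assume s: "(\<Sum>i\<in>UNIV. \<bar>u $ i - v $ i\<bar>) = 0"
  show "u = v" by (rule ccontr) (use l1_term_pos[of u v] s in simp)
qed simp

lemma l1_nonneg: "0 \<le> l1_dist y z"
  unfolding l1_dist_def by (intro sum_nonneg l1_term_nonneg)

lemma l1_zero: "length y = length z \<Longrightarrow> l1_dist y z = 0 \<longleftrightarrow> y = z"
proof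
  assume len: "length y = length z" and z: "l1_dist y z = 0"
  have "\<forall>j\<in>{..<length y}. (\<Sum>i\<in>UNIV. \<bar>(y!j) $ i - (z!j) $ i\<bar>) = 0"
    using z unfolding l1_dist_def by (subst sum_nonneg_eq_0_iff[symmetric]) (auto intro: l1_term_nonneg)
  then show "y = z" using len by (auto simp: l1_term_zero intro: nth_equalityI)
qed (simp add: l1_dist_def)

lemma l1_two:
  assumes "length y = length z" "j1 < length y" "j2 < length y" "j1 \<noteq> j2" "y!j1 \<noteq> z!j1" "y!j2 \<noteq> z!j2"
  shows "2 \<le> l1_dist y z"
proof -
  let ?t = "\<lambda>j. (\<Sum>i\<in>UNIV. \<bar>(y!j) $ i - (z!j) $ i\<bar>)"
  have "?t j1 + ?t j2 = sum ?t {j1, j2}" using assms by simp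
  also have "\<dots> \<le> sum ?t {..<length y}" by (rule sum_mono2) (use assms in \<open>auto intro: l1_term_nonneg\<close>)
  finally show ?thesis using l1_term_pos[OF assms(5)] l1_term_pos[OF assms(6)] by (simp add: l1_dist_def)
qed

locale PIS =
  fixes U :: "'d::finite site \<Rightarrow> real" and N N1 N2 :: nat and S1 S2 :: "'d site set"
    and L :: real and x :: "'d config"
  assumes N1: "1 \<le> N1" and N2: "1 \<le> N2" and NN: "N1 + N2 = N"
    and disj: "S1 \<inter> S2 = {}" and sep: "\<forall>a\<in>S1. \<forall>b\<in>S2. C_U U \<le> site_norm (a - b)"
    and cnt: "\<forall>y\<in>cube N L x. card {j. j < N \<and> y ! j \<in> S1} = N1 \<and> card {j. j < N \<and> y ! j \<in> S2} = N2"
    and xlen: "length x = N" and L0: "0 \<le> L" and Ufin: "finite {u. U u \<noteq> 0}"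
begin

definition "Lam = cube N L x"
definition "pos y = {j. j < N \<and> y ! j \<in> S1}"
definition "I1 = pos x"
definition "I2 = {..<N} - I1"
definition "x1 = subl I1 x"
definition "x2 = subl I2 x"
definition "Lam1 = cube N1 L x1"
definition "Lam2 = cube N2 L x2"
definition "JJ = {J. J \<subseteq> {..<N} \<and> card J = N1}"

lemma Lam_len: "y \<in> Lam \<Longrightarrow> length y = N" by (simp add: Lam_def cube_def)
lemma Lam1_len: "y \<in> Lam1 \<Longrightarrow> length y = N1" by (simp add: Lam1_def cube_def)
lemma Lam2_len: "y \<in> Lam2 \<Longrightarrow> length y = N2" by (simp add: Lam2_def cube_def)

lemma x_Lam: "x \<in> Lam" using in_cube_self[OF L0, of x] xlen by (simp add: Lam_def)

lemma pos_sub: "pos y \<subseteq> {..<N}" by (auto simp: pos_def)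
lemma pos_fin: "finite (pos y)" using pos_sub finite_subset by blast

lemma partition: assumes y: "y \<in> Lam" and j: "j < N" and n1: "y ! j \<notin> S1" shows "y ! j \<in> S2"
proof (rule ccontr)
  assume n2: "y ! j \<notin> S2"
  let ?A = "{j. j < N \<and> y ! j \<in> S1}" and ?B = "{j. j < N \<and> y ! j \<in> S2}"
  have "card (?A \<union> ?B) = N1 + N2" using cnt y disj by (subst card_Un_disjoint) (auto simp: Lam_def)
  moreover have "?A \<union> ?B \<subseteq> {..<N} - {j}" using n1 n2 by auto
  then have "card (?A \<union> ?B) \<le> card ({..<N} - {j})" by (intro card_mono) auto
  ultimately show False using j NN by simp
qed

lemma pos_card: "y \<in> Lam \<Longrightarrow> card (pos y) = N1" using cnt by (simp add: Lam_def pos_def)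

lemma pos_JJ: "y \<in> Lam \<Longrightarrow> pos y \<in> JJ" using pos_card pos_sub by (simp add: JJ_def)

lemma I1_JJ: "I1 \<in> JJ" using pos_JJ[OF x_Lam] by (simp add: I1_def)

lemma JJ_fin: "J \<in> JJ \<Longrightarrow> finite J" by (auto simp: JJ_def intro: finite_subset)
lemma JJ_card2: "J \<in> JJ \<Longrightarrow> card ({..<N} - J) = N2" using NN by (auto simp: JJ_def card_compl)
lemma JJ_card1: "J \<in> JJ \<Longrightarrow> card J = N1" by (auto simp: JJ_def)
lemma JJ_sub: "J \<in> JJ \<Longrightarrow> J \<subseteq> {..<N}" by (auto simp: JJ_def)

lemma x1_len: "length x1 = N1" using I1_JJ by (simp add: x1_def JJ_card1)
lemma x2_len: "length x2 = N2" using I1_JJ by (simp add: x2_def I2_def JJ_card2)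
lemma x_mrg: "x = mrg N I1 x1 x2" using mrg_subl[OF JJ_sub[OF I1_JJ] xlen] by (simp add: x1_def x2_def I2_def)

lemma x1_Lam1: "x1 \<in> Lam1" using in_cube_self[OF L0, of x1] x1_len by (simp add: Lam1_def)
lemma x2_Lam2: "x2 \<in> Lam2" using in_cube_self[OF L0, of x2] x2_len by (simp add: Lam2_def)

lemma dS_Lam: "y \<in> Lam \<longleftrightarrow> length y = N \<and> dS y x \<le> \<lfloor>L\<rfloor>"
  by (auto simp: Lam_def cube_def le_floor_iff)

end


lemma subl_dS:
  assumes len: "length y = N" "length z = N" and f: "bij_betw f {..<N} {..<N}"
    and bd: "\<forall>j<N. site_norm (y!j - z!(f j)) \<le> r" and r0: "0 \<le> r"
    and A: "A \<subseteq> {..<N}" and B: "B \<subseteq> {..<N}" and fA: "f ` A = B"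
  shows "dS (subl A y) (subl B z) \<le> r"
proof -
  have fin: "finite A" "finite B" using A B finite_subset by auto
  have inj: "inj_on f A" using f A by (auto simp: bij_betw_def intro: inj_on_subset)
  have cAB: "card A = card B" using card_image[OF inj] fA by simp
  define g where "g k = rnk B (f (enm A k))" for k
  have fe: "f (enm A k) \<in> B" if "k < card A" for k using enm_in[OF fin(1) that] fA by auto
  have g_into: "g k < card A" if "k < card A" for k using rnk_less[OF fin(2) fe[OF that]] cAB by (simp add: g_def)
  have g_inj: "inj_on g {..<card A}"
  proof (rule inj_onI)
    fix k l assume k: "k \<in> {..<card A}" and l: "l \<in> {..<card A}" and e: "g k = g l"
    then have "f (enm A k) = f (enm A l)" using enm_rnk[OF fin(2)] fe by (metis g_def lessThan_iff)
    then have "enm A k = enm A l" using inj enm_in[OF fin(1)] k l by (auto simp: inj_on_def)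
    then show "k = l" using enm_inj[OF fin(1)] k l by auto
  qed
  have gb: "bij_betw g {..<card A} {..<card A}"
    unfolding bij_betw_def using g_inj g_into endo_inj_surj[of "{..<card A}" g] by auto
  have "site_norm (subl A y ! k - subl B z ! g k) \<le> r" if "k < card A" for k
  proof -
    have "subl B z ! g k = z ! f (enm A k)" using g_into[OF that] cAB enm_rnk[OF fin(2) fe[OF that]] by (simp add: g_def)
    moreover have "enm A k < N" using enm_in[OF fin(1) that] A by auto
    ultimately show ?thesis using that bd by simp
  qed
  then show ?thesis using dS_le[of "subl A y" "card A" "subl B z" r] gb r0 cAB by auto
qed

context PIS begin

lemma f_maps:
  assumes y: "y \<in> Lam" and f: "bij_betw f {..<N} {..<N}" and bd: "\<forall>j<N. site_norm (y!j - x!(f j)) \<le> \<lfloor>L\<rfloor>"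
  shows "f ` pos y = I1"
proof -
  have ylen: "length y = N" using y Lam_len by simp
  have "f j \<in> I1" if j: "j \<in> pos y" for j
  proof (rule ccontr)
    assume nj: "f j \<notin> I1"
    have jN: "j < N" and yj: "y ! j \<in> S1" using j by (auto simp: pos_def)
    have fj: "f j < N" using f jN by (auto dest: bij_betwE)
    define z where "z = y[j := x ! f j]"
    have zlen: "length z = N" using ylen by (simp add: z_def)
    have "\<forall>i<N. site_norm (z!i - x!(f i)) \<le> \<lfloor>L\<rfloor>"
      using bd L0 ylen jN by (auto simp: z_def nth_list_update)
    then have "dS z x \<le> \<lfloor>L\<rfloor>" using dS_le[of z N x "\<lfloor>L\<rfloor>"] zlen xlen f L0 by auto
    then have zL: "z \<in> Lam" using zlen by (simp add: dS_Lam)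
    have "x ! f j \<notin> S1" using nj fj by (simp add: I1_def pos_def)
    then have "pos z = pos y - {j}" using ylen jN by (auto simp: pos_def z_def nth_list_update)
    then have "card (pos z) = N1 - 1" using j pos_fin pos_card[OF y] by simp
    then show False using pos_card[OF zL] N1 by simp
  qed
  then have sub: "f ` pos y \<subseteq> I1" by auto
  have inj: "inj_on f (pos y)" using f pos_sub by (auto simp: bij_betw_def intro: inj_on_subset)
  have "card (f ` pos y) = card I1" using card_image[OF inj] pos_card[OF y] pos_card[OF x_Lam] by (simp add: I1_def)
  then show ?thesis using sub card_subset_eq pos_fin I1_def by metis
qed

lemma split_in:
  assumes y: "y \<in> Lam"
  shows "subl (pos y) y \<in> Lam1" "subl ({..<N} - pos y) y \<in> Lam2"
proof -
  have ylen: "length y = N" using y Lam_len by simp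
  obtain f where f: "bij_betw f {..<N} {..<N}" "\<forall>j<N. site_norm (y!j - x!(f j)) \<le> \<lfloor>L\<rfloor>"
    using y dS_le[of y N x "\<lfloor>L\<rfloor>"] ylen xlen by (auto simp: dS_Lam)
  have fL: "0 \<le> \<lfloor>L\<rfloor>" using L0 by simp
  have im1: "f ` pos y = I1" using f_maps[OF y f] .
  have im2: "f ` ({..<N} - pos y) = I2"
  proof -
    have "f ` ({..<N} - pos y) = f ` {..<N} - f ` pos y"
      using f(1) pos_sub by (intro inj_on_image_set_diff) (auto simp: bij_betw_def)
    then show ?thesis using f(1) im1 by (simp add: bij_betw_def I2_def)
  qed
  have "dS (subl (pos y) y) x1 \<le> \<lfloor>L\<rfloor>"
    unfolding x1_def by (rule subl_dS[OF ylen xlen f(1) f(2) fL pos_sub _ im1]) (simp add: I1_def pos_sub)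
  then show "subl (pos y) y \<in> Lam1" using pos_card[OF y] by (simp add: Lam1_def cube_def le_floor_iff)
  have "dS (subl ({..<N} - pos y) y) x2 \<le> \<lfloor>L\<rfloor>"
    unfolding x2_def by (rule subl_dS[OF ylen xlen f(1) f(2) fL _ _ im2]) (auto simp: I2_def)
  then show "subl ({..<N} - pos y) y \<in> Lam2" using JJ_card2[OF pos_JJ[OF y]] by (simp add: Lam2_def cube_def le_floor_iff)
qed

lemma mrg_Lam:
  assumes a: "a \<in> Lam1" and b: "b \<in> Lam2" and J: "J \<in> JJ"
  shows "mrg N J a b \<in> Lam"
proof -
  have c: "card J = card I1" using JJ_card1[OF J] JJ_card1[OF I1_JJ] by simp
  have la: "length a = card J" "length x1 = card J" using Lam1_len[OF a] x1_len JJ_card1[OF J] by auto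
  have lb: "length b = card ({..<N} - J)" "length x2 = card ({..<N} - J)" using Lam2_len[OF b] x2_len JJ_card2[OF J] by auto
  have d1: "dS a x1 \<le> \<lfloor>L\<rfloor>" using a by (simp add: Lam1_def cube_def le_floor_iff)
  have d2: "dS b x2 \<le> \<lfloor>L\<rfloor>" using b by (simp add: Lam2_def cube_def le_floor_iff)
  have "dS (mrg N J a b) (mrg N I1 x1 x2) \<le> \<lfloor>L\<rfloor>"
    by (rule dS_mrg[OF JJ_sub[OF J] JJ_sub[OF I1_JJ] c la lb d1 d2])
  then show ?thesis using x_mrg by (simp add: dS_Lam)
qed

lemma x2_S2: "k < N2 \<Longrightarrow> x2 ! k \<in> S2"
proof -
  assume k: "k < N2"
  have c: "card I2 = N2" using JJ_card2[OF I1_JJ] by (simp add: I2_def)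
  have e: "enm I2 k \<in> I2" using enm_in[of I2 k] k c by (simp add: I2_def)
  then have "x ! enm I2 k \<notin> S1" "enm I2 k < N" by (auto simp: I2_def I1_def pos_def)
  then show ?thesis using partition[OF x_Lam] k c by (simp add: x2_def)
qed

lemma x1_S1: "k < N1 \<Longrightarrow> x1 ! k \<in> S1"
proof -
  assume k: "k < N1"
  have c: "card I1 = N1" using JJ_card1[OF I1_JJ] .
  have e: "enm I1 k \<in> I1" using enm_in[of I1 k] k c pos_fin by (simp add: I1_def)
  then show ?thesis using k c by (simp add: x1_def I1_def pos_def)
qed

lemma Lam1_S1: assumes a: "a \<in> Lam1" and k: "k < N1" shows "a ! k \<in> S1"
proof -
  let ?w = "mrg N I1 a x2"
  have w: "?w \<in> Lam" using mrg_Lam[OF a x2_Lam2 I1_JJ] .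
  have sub: "I2 \<subseteq> {j. j < N \<and> ?w ! j \<in> S2}"
  proof
    fix j assume j: "j \<in> I2"
    have fI2: "finite I2" by (simp add: I2_def)
    have "?w ! j = x2 ! rnk I2 j" using j by (auto simp: mrg_nth I2_def)
    moreover have "rnk I2 j < N2" using rnk_less[OF fI2 j] JJ_card2[OF I1_JJ] by (simp add: I2_def)
    ultimately show "j \<in> {j. j < N \<and> ?w ! j \<in> S2}" using x2_S2 j by (auto simp: I2_def)
  qed
  have "card I2 = N2" using JJ_card2[OF I1_JJ] by (simp add: I2_def)
  then have eq: "I2 = {j. j < N \<and> ?w ! j \<in> S2}" using cnt w sub by (intro card_subset_eq) (auto simp: Lam_def)
  have e: "enm I1 k \<in> I1" "enm I1 k < N" using enm_in[of I1 k] k JJ_card1[OF I1_JJ] JJ_fin[OF I1_JJ] JJ_sub[OF I1_JJ] by auto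
  then have "enm I1 k \<notin> I2" by (simp add: I2_def)
  then have "?w ! enm I1 k \<notin> S2" using eq e by auto
  moreover have "?w ! enm I1 k = a ! k" using mrg_nth1[OF JJ_sub[OF I1_JJ]] k JJ_card1[OF I1_JJ] by simp
  ultimately show ?thesis using partition[OF w e(2)] disj by auto
qed

lemma Lam2_S2: assumes b: "b \<in> Lam2" and k: "k < N2" shows "b ! k \<in> S2"
proof -
  let ?w = "mrg N I1 x1 b"
  have w: "?w \<in> Lam" using mrg_Lam[OF x1_Lam1 b I1_JJ] .
  have fI1: "finite I1" using JJ_fin[OF I1_JJ] .
  have sub: "I1 \<subseteq> pos ?w"
  proof
    fix j assume j: "j \<in> I1"
    have "?w ! j = x1 ! rnk I1 j" using j JJ_sub[OF I1_JJ] by (auto simp: mrg_nth)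
    moreover have "rnk I1 j < N1" using rnk_less[OF fI1 j] JJ_card1[OF I1_JJ] by simp
    ultimately show "j \<in> pos ?w" using x1_S1 j JJ_sub[OF I1_JJ] by (auto simp: pos_def)
  qed
  then have eq: "I1 = pos ?w" using pos_card[OF w] JJ_card1[OF I1_JJ] pos_fin by (intro card_subset_eq) auto
  have c2: "card ({..<N} - I1) = N2" using JJ_card2[OF I1_JJ] .
  have e: "enm ({..<N} - I1) k \<in> {..<N} - I1" using enm_in[of "{..<N} - I1" k] k c2 by simp
  then have e2: "enm ({..<N} - I1) k < N" by simp
  have "?w ! enm ({..<N} - I1) k \<notin> S1" using eq e by (auto simp: pos_def)
  then have "?w ! enm ({..<N} - I1) k \<in> S2" using partition[OF w e2] by simp
  moreover have "?w ! enm ({..<N} - I1) k = b ! k" using mrg_nth2[OF JJ_sub[OF I1_JJ]] k c2 by simp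
  ultimately show ?thesis by simp
qed

lemma pos_mrg:
  assumes a: "a \<in> Lam1" and b: "b \<in> Lam2" and J: "J \<in> JJ"
  shows "pos (mrg N J a b) = J"
proof -
  have fJ: "finite J" "finite ({..<N} - J)" using JJ_fin[OF J] by auto
  have "j \<in> pos (mrg N J a b) \<longleftrightarrow> j \<in> J" for j
  proof (cases "j \<in> J")
    case True
    then have "j < N" "rnk J j < N1" using JJ_sub[OF J] rnk_less[OF fJ(1) True] JJ_card1[OF J] by auto
    then show ?thesis using True Lam1_S1[OF a] by (simp add: pos_def mrg_nth)
  next
    case False
    show ?thesis
    proof (cases "j < N")
      case True
      then have jc: "j \<in> {..<N} - J" using False by simp
      then have "rnk ({..<N} - J) j < N2" using rnk_less[OF fJ(2) jc] JJ_card2[OF J] by simp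
      then have "b ! rnk ({..<N} - J) j \<in> S2" using Lam2_S2[OF b] by simp
      then show ?thesis using True False disj by (auto simp: pos_def mrg_nth)
    qed (use False in \<open>auto simp: pos_def\<close>)
  qed
  then show ?thesis by auto
qed

lemma nbr_pos:
  assumes y: "y \<in> Lam" and y': "y' \<in> Lam" and d: "l1_dist y' y = 1"
  shows "pos y' = pos y"
proof (rule ccontr)
  assume ne: "pos y' \<noteq> pos y"
  have c: "card (pos y') = card (pos y)" using pos_card y y' by simp
  have "\<not> pos y \<subseteq> pos y'" using ne c card_subset_eq pos_fin by metis
  then obtain j1 where j1: "j1 \<in> pos y" "j1 \<notin> pos y'" by blast
  have "\<not> pos y' \<subseteq> pos y" using ne c card_subset_eq pos_fin by metis
  then obtain j2 where j2: "j2 \<in> pos y'" "j2 \<notin> pos y" by blast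
  have a1: "j1 < N" "y ! j1 \<in> S1" "y' ! j1 \<notin> S1" using j1 by (auto simp: pos_def)
  have a2: "j2 < N" "y' ! j2 \<in> S1" "y ! j2 \<notin> S1" using j2 by (auto simp: pos_def)
  have "j1 \<noteq> j2" using a1 a2 by auto
  moreover have "y' ! j1 \<noteq> y ! j1" "y' ! j2 \<noteq> y ! j2" using a1 a2 by auto
  ultimately have "2 \<le> l1_dist y' y"
    using a1 a2 Lam_len[OF y] Lam_len[OF y'] l1_two[of y' y j1 j2] by simp
  then show False using d by simp
qed

lemma U_cross: assumes "a \<in> S1" "b \<in> S2" shows "U (a - b) = 0" "U (b - a) = 0"
proof -
  have "site_norm u < C_U U" if "U u \<noteq> 0" for u
  proof -
    have "site_norm u \<le> Max (insert 0 (site_norm ` {u. U u \<noteq> 0}))"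
      using that Ufin by (intro Max_ge) auto
    then show ?thesis by (simp add: C_U_def)
  qed
  moreover have "C_U U \<le> site_norm (a - b)" "C_U U \<le> site_norm (b - a)"
    using sep assms site_norm_minus[of b a] by auto
  ultimately show "U (a - b) = 0" "U (b - a) = 0" by force+
qed

end

lemma ball_finite: "finite {u :: 'd::finite site. site_norm (u - c) \<le> R}"
proof -
  have "{u :: 'd site. site_norm (u - c) \<le> R} \<subseteq> vec_lambda ` (PiE UNIV (\<lambda>i. {c$i - R .. c$i + R}))"
  proof
    fix u :: "'d site" assume u: "u \<in> {u. site_norm (u - c) \<le> R}"
    have h: "\<bar>u$i - c$i\<bar> \<le> R" for i using site_norm_ge[of "u - c" i] u by simp
    have "c$i - R \<le> u$i \<and> u$i \<le> c$i + R" for i using h[of i] by linarith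
    then have "vec_nth u \<in> PiE UNIV (\<lambda>i. {c$i - R .. c$i + R})" by auto
    then show "u \<in> vec_lambda ` (PiE UNIV (\<lambda>i. {c$i - R .. c$i + R}))"
      by (intro image_eqI[of _ _ "vec_nth u"]) (auto simp: vec_nth_inverse)
  qed
  moreover have "finite (PiE (UNIV::'d set) (\<lambda>i. {c$i - R .. c$i + R}))" by (intro finite_PiE) auto
  ultimately show ?thesis by (meson finite_imageI finite_subset)
qed

lemma cube_finite:
  fixes a :: "'d::finite config"
  assumes "length a = n"
  shows "finite (cube n L a)"
proof -
  define A where "A = (\<Union>i<n. {u :: 'd site. site_norm (u - a!i) \<le> \<lfloor>L\<rfloor>})"
  have fA: "finite A" unfolding A_def using ball_finite by auto
  have "cube n L a \<subseteq> {xs. set xs \<subseteq> A \<and> length xs = n}"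
  proof
    fix y assume y: "y \<in> cube n L a"
    then have ly: "length y = n" and d: "dS y a \<le> \<lfloor>L\<rfloor>" by (auto simp: cube_def le_floor_iff)
    obtain f where f: "bij_betw f {..<n} {..<n}" "\<forall>j<n. site_norm (y!j - a!(f j)) \<le> \<lfloor>L\<rfloor>"
      using dS_le[OF ly assms] d by auto
    have "y ! j \<in> A" if "j < n" for j
      using f that unfolding A_def by (auto dest: bij_betwE intro!: bexI[of _ "f j"])
    then show "y \<in> {xs. set xs \<subseteq> A \<and> length xs = n}" using ly by (auto simp: in_set_conv_nth)
  qed
  then show ?thesis using finite_lists_length_eq[OF fA] finite_subset by blast
qed

context PIS begin

lemma Lam_fin: "finite Lam" using cube_finite[OF xlen] by (simp add: Lam_def)
lemma Lam1_fin: "finite Lam1" using cube_finite[OF x1_len] by (simp add: Lam1_def)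
lemma Lam2_fin: "finite Lam2" using cube_finite[OF x2_len] by (simp add: Lam2_def)

lemma sm1: "J \<in> JJ \<Longrightarrow> a \<in> Lam1 \<Longrightarrow> subl J (mrg N J a b) = a"
  by (rule subl_mrg1[OF JJ_sub]) (auto simp: Lam1_len JJ_card1)

lemma sm2: "J \<in> JJ \<Longrightarrow> b \<in> Lam2 \<Longrightarrow> subl ({..<N} - J) (mrg N J a b) = b"
  by (rule subl_mrg2[OF JJ_sub]) (auto simp: Lam2_len JJ_card2)

lemma sum_CJ:
  assumes J: "J \<in> JJ"
  shows "(\<Sum>y | y \<in> Lam \<and> pos y = J \<and> P y. g y) =
         (\<Sum>p | p \<in> Lam1 \<times> Lam2 \<and> P (mrg N J (fst p) (snd p)). g (mrg N J (fst p) (snd p)))"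
proof (rule sum.reindex_bij_witness[where j="\<lambda>y. (subl J y, subl ({..<N} - J) y)" and i="\<lambda>p. mrg N J (fst p) (snd p)"])
  fix y assume y: "y \<in> {y. y \<in> Lam \<and> pos y = J \<and> P y}"
  then have yL: "y \<in> Lam" and py: "pos y = J" and Py: "P y" by auto
  have e: "mrg N J (subl J y) (subl ({..<N} - J) y) = y" using mrg_subl[OF JJ_sub[OF J] Lam_len[OF yL]] .
  show "mrg N J (fst (subl J y, subl ({..<N} - J) y)) (snd (subl J y, subl ({..<N} - J) y)) = y" using e by simp
  show "(subl J y, subl ({..<N} - J) y) \<in> {p. p \<in> Lam1 \<times> Lam2 \<and> P (mrg N J (fst p) (snd p))}"
    using split_in[OF yL] py e Py by simp
  show "g (mrg N J (fst (subl J y, subl ({..<N} - J) y)) (snd (subl J y, subl ({..<N} - J) y))) = g y" using e by simp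
next
  fix p assume p: "p \<in> {p. p \<in> Lam1 \<times> Lam2 \<and> P (mrg N J (fst p) (snd p))}"
  then have a: "fst p \<in> Lam1" and b: "snd p \<in> Lam2" and P: "P (mrg N J (fst p) (snd p))" by auto
  show "(subl J (mrg N J (fst p) (snd p)), subl ({..<N} - J) (mrg N J (fst p) (snd p))) = p"
    using sm1[OF J a] sm2[OF J b] by (simp add: prod_eq_iff)
  show "mrg N J (fst p) (snd p) \<in> {y. y \<in> Lam \<and> pos y = J \<and> P y}"
    using mrg_Lam[OF a b J] pos_mrg[OF a b J] P by simp
qed

lemma sum_CJ':
  assumes J: "J \<in> JJ"
  shows "(\<Sum>y\<in>Lam. if pos y = J then g (subl J y) (subl ({..<N} - J) y) else 0) = (\<Sum>a\<in>Lam1. \<Sum>b\<in>Lam2. g a b)"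
proof -
  have "(\<Sum>y\<in>Lam. if pos y = J then g (subl J y) (subl ({..<N} - J) y) else 0) =
        (\<Sum>y | y \<in> Lam \<and> pos y = J \<and> True. g (subl J y) (subl ({..<N} - J) y))"
    using Lam_fin by (simp add: sum.inter_filter[symmetric])
  also have "\<dots> = (\<Sum>p | p \<in> Lam1 \<times> Lam2 \<and> True. g (subl J (mrg N J (fst p) (snd p))) (subl ({..<N} - J) (mrg N J (fst p) (snd p))))"
    by (rule sum_CJ[OF J])
  also have "\<dots> = (\<Sum>p \<in> Lam1 \<times> Lam2. g (fst p) (snd p))"
  proof (rule sum.cong)
    fix p assume p: "p \<in> Lam1 \<times> Lam2"
    then show "g (subl J (mrg N J (fst p) (snd p))) (subl ({..<N} - J) (mrg N J (fst p) (snd p))) = g (fst p) (snd p)"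
      using sm1[OF J] sm2[OF J] by auto
  qed simp
  also have "\<dots> = (\<Sum>a\<in>Lam1. \<Sum>b\<in>Lam2. g a b)"
    by (simp add: sum.cartesian_product split_beta)
  finally show ?thesis .
qed

end

context PIS begin

definition TT :: "nat set \<Rightarrow> ('d config \<Rightarrow> complex) \<Rightarrow> ('d config \<Rightarrow> complex) \<Rightarrow> 'd config \<Rightarrow> complex" where
  "TT J f g y = (if y \<in> Lam \<and> pos y = J then f (subl J y) * g (subl ({..<N} - J) y) else 0)"

lemma TT_mrg: "J \<in> JJ \<Longrightarrow> a \<in> Lam1 \<Longrightarrow> b \<in> Lam2 \<Longrightarrow> TT J f g (mrg N J a b) = f a * g b"
  by (simp add: TT_def mrg_Lam pos_mrg sm1 sm2)

lemma TT_ip: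
  assumes J: "J \<in> JJ" and K: "K \<in> JJ"
  shows "(\<Sum>y\<in>Lam. TT J f g y * cnj (TT K f' g' y)) =
    (if J = K then (\<Sum>a\<in>Lam1. f a * cnj (f' a)) * (\<Sum>b\<in>Lam2. g b * cnj (g' b)) else 0)"
proof (cases "J = K")
  case True
  have "(\<Sum>y\<in>Lam. TT J f g y * cnj (TT K f' g' y)) =
     (\<Sum>y\<in>Lam. if pos y = J then (\<lambda>a b. f a * cnj (f' a) * (g b * cnj (g' b))) (subl J y) (subl ({..<N} - J) y) else 0)"
    using True by (intro sum.cong) (auto simp: TT_def)
  also have "\<dots> = (\<Sum>a\<in>Lam1. \<Sum>b\<in>Lam2. f a * cnj (f' a) * (g b * cnj (g' b)))"
    by (rule sum_CJ'[OF J])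
  also have "\<dots> = (\<Sum>a\<in>Lam1. f a * cnj (f' a)) * (\<Sum>b\<in>Lam2. g b * cnj (g' b))"
    by (simp add: sum_product)
  finally show ?thesis using True by simp
next
  case False
  have z: "TT J f g y * cnj (TT K f' g' y) = 0" for y using False by (simp add: TT_def)
  have ff: "(J = K) = False" using False by simp
  show ?thesis by (simp only: z sum.neutral_const ff if_False)
qed

lemma norm_le1:
  assumes "sqrt (\<Sum>y\<in>A. (cmod (g y))\<^sup>2) = 1" "finite A" "b \<in> A"
  shows "cmod (g b) \<le> 1"
proof -
  have s: "(\<Sum>y\<in>A. (cmod (g y))\<^sup>2) = 1" using assms(1) by (metis real_sqrt_eq_1_iff)
  have "(cmod (g b))\<^sup>2 \<le> (\<Sum>y\<in>A. (cmod (g y))\<^sup>2)" by (rule member_le_sum) (use assms in auto)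
  then have "(cmod (g b))\<^sup>2 \<le> 1" using s by simp
  then show ?thesis by (simp add: power_le_one_iff)
qed

lemma TT_loc:
  assumes J: "J \<in> JJ" and m0: "0 \<le> m"
    and c1: "c1 \<in> Lam1" and f: "localizing_at \<tau> L m Lam1 f c1"
    and c2: "c2 \<in> Lam2" and g: "localizing_at \<tau> L m Lam2 g c2"
    and y: "y \<in> Lam" and d: "real_of_int (dS y (mrg N J c1 c2)) \<ge> L powr \<tau>"
  shows "cmod (TT J f g y) \<le> exp (- m * real_of_int (dS y (mrg N J c1 c2)))"
proof (cases "pos y = J")
  case False
  then show ?thesis by (simp add: TT_def)
next
  case True
  define a where "a = subl J y"
  define b where "b = subl ({..<N} - J) y"
  have a: "a \<in> Lam1" and b: "b \<in> Lam2" using split_in[OF y] True by (auto simp: a_def b_def)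
  have ye: "y = mrg N J a b" using mrg_subl[OF JJ_sub[OF J] Lam_len[OF y]] by (simp add: a_def b_def)
  have Ty: "TT J f g y = f a * g b" using ye TT_mrg[OF J a b] by simp
  define D where "D = dS y (mrg N J c1 c2)"
  have dd: "D \<le> max (dS a c1) (dS b c2)"
    unfolding D_def ye
    by (rule dS_mrg[OF JJ_sub[OF J] JJ_sub[OF J] refl])
      (use a b c1 c2 Lam1_len Lam2_len JJ_card1[OF J] JJ_card2[OF J] in auto)
  have gb: "cmod (g b) \<le> 1" using g b Lam2_fin by (intro norm_le1[of _ Lam2]) (auto simp: localizing_at_def)
  have fa: "cmod (f a) \<le> 1" using f a Lam1_fin by (intro norm_le1[of _ Lam1]) (auto simp: localizing_at_def)
  show ?thesis
  proof (cases "dS b c2 \<le> dS a c1")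
    case True
    then have "D \<le> dS a c1" using dd by simp
    then have "real_of_int (dS a c1) \<ge> L powr \<tau>" using d D_def by linarith
    then have "cmod (f a) \<le> exp (- m * real_of_int (dS a c1))" using f a by (auto simp: localizing_at_def)
    also have "\<dots> \<le> exp (- m * real_of_int D)" using \<open>D \<le> dS a c1\<close> m0 by (simp add: mult_left_mono)
    finally have "cmod (f a) * cmod (g b) \<le> exp (- m * real_of_int D) * 1"
      using gb by (intro mult_mono) auto
    then show ?thesis using Ty by (simp add: D_def norm_mult)
  next
    case False
    then have "D \<le> dS b c2" using dd by simp
    then have "real_of_int (dS b c2) \<ge> L powr \<tau>" using d D_def by linarith
    then have "cmod (g b) \<le> exp (- m * real_of_int (dS b c2))" using g b by (auto simp: localizing_at_def)
    also have "\<dots> \<le> exp (- m * real_of_int D)" using \<open>D \<le> dS b c2\<close> m0 by (simp add: mult_left_mono)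
    finally have "cmod (f a) * cmod (g b) \<le> 1 * exp (- m * real_of_int D)"
      using fa by (intro mult_mono) auto
    then show ?thesis using Ty by (simp add: D_def norm_mult)
  qed
qed


lemma sum_times_single: "(\<Sum>p\<in>A \<times> {b}. h p) = (\<Sum>a\<in>A. h (a, b))"
proof -
  have "(\<Sum>a\<in>A. \<Sum>b'\<in>{b}. h (a,b')) = (\<Sum>(x,y)\<in>A\<times>{b}. h (x,y))" by (rule sum.cartesian_product)
  then show ?thesis by simp
qed

lemma sum_single_times: "(\<Sum>p\<in>{a} \<times> B. h p) = (\<Sum>b\<in>B. h (a, b))"
proof -
  have "(\<Sum>a'\<in>{a}. \<Sum>b'\<in>B. h (a',b')) = (\<Sum>(x,y)\<in>{a}\<times>B. h (x,y))" by (rule sum.cartesian_product)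
  then show ?thesis by simp
qed

lemma nbr_sum:
  assumes J: "J \<in> JJ" and y: "y \<in> Lam" and py: "pos y = J"
  shows "(\<Sum>y'\<in>{y'\<in>Lam. length y' = length y \<and> l1_dist y' y = 1}. TT J f g y') =
    (\<Sum>a'\<in>{a'\<in>Lam1. length a' = length (subl J y) \<and> l1_dist a' (subl J y) = 1}. f a') * g (subl ({..<N} - J) y)
    + f (subl J y) * (\<Sum>b'\<in>{b'\<in>Lam2. length b' = length (subl ({..<N} - J) y) \<and> l1_dist b' (subl ({..<N} - J) y) = 1}. g b')"
proof -
  define a where "a = subl J y"
  define b where "b = subl ({..<N} - J) y"
  have a: "a \<in> Lam1" and b: "b \<in> Lam2" using split_in[OF y] py by (auto simp: a_def b_def)
  have ye: "y = mrg N J a b" using mrg_subl[OF JJ_sub[OF J] Lam_len[OF y]] by (simp add: a_def b_def)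
  define Nb1 where "Nb1 = {a'\<in>Lam1. length a' = length a \<and> l1_dist a' a = 1}"
  define Nb2 where "Nb2 = {b'\<in>Lam2. length b' = length b \<and> l1_dist b' b = 1}"
  have S: "{y'\<in>Lam. length y' = length y \<and> l1_dist y' y = 1} = {y'. y' \<in> Lam \<and> pos y' = J \<and> l1_dist y' y = 1}"
    using nbr_pos[OF y] py Lam_len[OF y] Lam_len by auto
  have l1e: "l1_dist (mrg N J a' b') y = l1_dist a' a + l1_dist b' b" if "a' \<in> Lam1" "b' \<in> Lam2" for a' b'
    unfolding ye by (rule l1_mrg[OF JJ_sub[OF J]]) (use that a b Lam1_len Lam2_len JJ_card1[OF J] JJ_card2[OF J] in auto)
  have aa: "l1_dist a a = 0" "l1_dist b b = 0" by (simp_all add: l1_zero)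
  have Q: "{p. p \<in> Lam1 \<times> Lam2 \<and> l1_dist (mrg N J (fst p) (snd p)) y = 1} = Nb1 \<times> {b} \<union> {a} \<times> Nb2"
  proof (intro set_eqI iffI)
    fix p assume p: "p \<in> {p. p \<in> Lam1 \<times> Lam2 \<and> l1_dist (mrg N J (fst p) (snd p)) y = 1}"
    then have p1: "fst p \<in> Lam1" "snd p \<in> Lam2" and s1: "l1_dist (fst p) a + l1_dist (snd p) b = 1"
      using l1e by auto
    have la: "length (fst p) = length a" "length (snd p) = length b" using p1 a b Lam1_len Lam2_len by auto
    have n: "0 \<le> l1_dist (fst p) a" "0 \<le> l1_dist (snd p) b" by (rule l1_nonneg)+
    show "p \<in> Nb1 \<times> {b} \<union> {a} \<times> Nb2"
    proof (cases "l1_dist (fst p) a = 0")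
      case True
      then have "fst p = a" using l1_zero[OF la(1)] by simp
      then show ?thesis using True s1 p1 la by (auto simp: Nb2_def mem_Times_iff)
    next
      case False
      then have "l1_dist (snd p) b = 0" using n s1 by linarith
      then have "snd p = b" using l1_zero[OF la(2)] by simp
      then show ?thesis using \<open>l1_dist (snd p) b = 0\<close> s1 p1 la by (auto simp: Nb1_def mem_Times_iff)
    qed
  next
    fix p assume "p \<in> Nb1 \<times> {b} \<union> {a} \<times> Nb2"
    then show "p \<in> {p. p \<in> Lam1 \<times> Lam2 \<and> l1_dist (mrg N J (fst p) (snd p)) y = 1}"
      using a b l1e aa by (auto simp: Nb1_def Nb2_def)
  qed
  have disj: "Nb1 \<times> {b} \<inter> {a} \<times> Nb2 = {}"
    using aa by (auto simp: Nb1_def)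
  have fin: "finite Nb1" "finite Nb2" using Lam1_fin Lam2_fin by (auto simp: Nb1_def Nb2_def)
  have "(\<Sum>y'\<in>{y'\<in>Lam. length y' = length y \<and> l1_dist y' y = 1}. TT J f g y') =
     (\<Sum>p | p \<in> Lam1 \<times> Lam2 \<and> l1_dist (mrg N J (fst p) (snd p)) y = 1. TT J f g (mrg N J (fst p) (snd p)))"
    unfolding S by (rule sum_CJ[OF J])
  also have "\<dots> = (\<Sum>p \<in> Nb1 \<times> {b} \<union> {a} \<times> Nb2. f (fst p) * g (snd p))"
    unfolding Q by (rule sum.cong) (auto simp: Nb1_def Nb2_def TT_mrg[OF J] a b)
  also have "\<dots> = (\<Sum>p \<in> Nb1 \<times> {b}. f (fst p) * g (snd p)) + (\<Sum>p \<in> {a} \<times> Nb2. f (fst p) * g (snd p))"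
    by (rule sum.union_disjoint) (use fin disj in auto)
  also have "\<dots> = (\<Sum>a'\<in>Nb1. f a') * g b + f a * (\<Sum>b'\<in>Nb2. g b')"
    by (simp add: sum_times_single sum_single_times sum_distrib_left sum_distrib_right)
  finally show ?thesis by (simp add: Nb1_def Nb2_def a_def b_def)
qed

lemma TT_eig:
  assumes J: "J \<in> JJ"
    and f: "\<forall>a\<in>Lam1. ham_restr lam V U Lam1 f a = E1 * f a"
    and g: "\<forall>b\<in>Lam2. ham_restr lam V U Lam2 g b = E2 * g b"
    and y: "y \<in> Lam"
  shows "ham_restr lam V U Lam (TT J f g) y = (E1 + E2) * TT J f g y"
proof (cases "pos y = J")
  case False
  have "TT J f g y' = 0" if "y' \<in> {y'\<in>Lam. length y' = length y \<and> l1_dist y' y = 1}" for y'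
    using that nbr_pos[OF y] False by (auto simp: TT_def)
  then show ?thesis using y False by (simp add: ham_restr_def TT_def)
next
  case True
  define a where "a = subl J y"
  define b where "b = subl ({..<N} - J) y"
  have a: "a \<in> Lam1" and b: "b \<in> Lam2" using split_in[OF y] True by (auto simp: a_def b_def)
  have ye: "y = mrg N J a b" using mrg_subl[OF JJ_sub[OF J] Lam_len[OF y]] by (simp add: a_def b_def)
  have la: "length a = card J" "length b = card ({..<N} - J)" using a b Lam1_len Lam2_len JJ_card1[OF J] JJ_card2[OF J] by auto
  have pot: "pot V y = pot V a + pot V b" unfolding ye by (rule pot_mrg[OF JJ_sub[OF J] la])
  have int: "inter U y = inter U a + inter U b" unfolding ye
    by (rule inter_mrg[OF JJ_sub[OF J] la]) (use Lam1_S1[OF a] Lam2_S2[OF b] U_cross la JJ_card1[OF J] JJ_card2[OF J] in auto)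
  have Ty: "TT J f g y = f a * g b" using ye TT_mrg[OF J a b] by simp
  define s1 where "s1 = (\<Sum>a'\<in>{a'\<in>Lam1. length a' = length a \<and> l1_dist a' a = 1}. f a')"
  define s2 where "s2 = (\<Sum>b'\<in>{b'\<in>Lam2. length b' = length b \<and> l1_dist b' b = 1}. g b')"
  define c1 where "c1 = lam * pot V a + inter U a"
  define c2 where "c2 = lam * pot V b + inter U b"
  have ns: "(\<Sum>y'\<in>{y'\<in>Lam. length y' = length y \<and> l1_dist y' y = 1}. TT J f g y') = s1 * g b + f a * s2"
    using nbr_sum[OF J y True] by (simp add: s1_def s2_def a_def b_def)
  have h1: "- s1 + complex_of_real c1 * f a = E1 * f a" using f a by (simp add: ham_restr_def s1_def c1_def)
  have h2: "- s2 + complex_of_real c2 * g b = E2 * g b" using g b by (simp add: ham_restr_def s2_def c2_def)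
  have "ham_restr lam V U Lam (TT J f g) y = - (s1 * g b + f a * s2) + complex_of_real (c1 + c2) * (f a * g b)"
    using y ns Ty pot int by (simp add: ham_restr_def c1_def c2_def algebra_simps)
  also have "\<dots> = (- s1 + complex_of_real c1 * f a) * g b + f a * (- s2 + complex_of_real c2 * g b)"
    by (simp add: algebra_simps)
  also have "\<dots> = (E1 + E2) * TT J f g y" using h1 h2 Ty by (simp add: algebra_simps)
  finally show ?thesis .
qed


lemma norm_from_ip:
  assumes "(\<Sum>y\<in>A. h y * cnj (h y)) = 1"
  shows "sqrt (\<Sum>y\<in>A. (cmod (h y))\<^sup>2) = 1"
proof -
  have "complex_of_real (\<Sum>y\<in>A. (cmod (h y))\<^sup>2) = (\<Sum>y\<in>A. h y * cnj (h y))"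
    by (simp only: of_real_sum complex_norm_square)
  then have "(\<Sum>y\<in>A. (cmod (h y))\<^sup>2) = 1" using assms by (metis of_real_eq_1_iff)
  then show ?thesis by simp
qed

lemma Lam_image: "Lam = (\<lambda>(J,a,b). mrg N J a b) ` (JJ \<times> Lam1 \<times> Lam2)"
proof (intro set_eqI iffI)
  fix y assume y: "y \<in> Lam"
  have "y = (\<lambda>(J,a,b). mrg N J a b) (pos y, subl (pos y) y, subl ({..<N} - pos y) y)"
    using mrg_subl[OF pos_sub Lam_len[OF y]] by simp
  moreover have "(pos y, subl (pos y) y, subl ({..<N} - pos y) y) \<in> JJ \<times> Lam1 \<times> Lam2"
    using pos_JJ[OF y] split_in[OF y] by simp
  ultimately show "y \<in> (\<lambda>(J,a,b). mrg N J a b) ` (JJ \<times> Lam1 \<times> Lam2)" by blast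
next
  fix y assume "y \<in> (\<lambda>(J,a,b). mrg N J a b) ` (JJ \<times> Lam1 \<times> Lam2)"
  then show "y \<in> Lam" using mrg_Lam by auto
qed

lemma Lam_inj: "inj_on (\<lambda>(J,a,b). mrg N J a b) (JJ \<times> Lam1 \<times> Lam2)"
proof (rule inj_onI)
  fix p q assume p: "p \<in> JJ \<times> Lam1 \<times> Lam2" and q: "q \<in> JJ \<times> Lam1 \<times> Lam2"
    and e: "(\<lambda>(J,a,b). mrg N J a b) p = (\<lambda>(J,a,b). mrg N J a b) q"
  obtain J a b where pp: "p = (J,a,b)" "J \<in> JJ" "a \<in> Lam1" "b \<in> Lam2" using p by auto
  obtain K a' b' where qq: "q = (K,a',b')" "K \<in> JJ" "a' \<in> Lam1" "b' \<in> Lam2" using q by auto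
  have e': "mrg N J a b = mrg N K a' b'" using e pp qq by simp
  have "J = K" using pos_mrg[OF pp(3,4,2)] pos_mrg[OF qq(3,4,2)] e' by simp
  moreover have "a = a'" using sm1[OF pp(2,3), of b] sm1[OF qq(2,3), of b'] e' \<open>J = K\<close> by simp
  moreover have "b = b'" using sm2[OF pp(2,4), of a] sm2[OF qq(2,4), of a'] e' \<open>J = K\<close> by simp
  ultimately show "p = q" using pp qq by simp
qed

lemma card_Lam: "card Lam = card JJ * (card Lam1 * card Lam2)"
  using card_image[OF Lam_inj] Lam_image by (simp add: card_cartesian_product)

lemma prod_event:
  assumes m0: "0 \<le> m"
    and E1: "m_localizing_cube \<tau> m lam V U N1 L x1"
    and E2: "m_localizing_cube \<tau> m lam V U N2 L x2"
  shows "m_localizing_cube \<tau> m lam V U N L x"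
proof -
  obtain B1 where cB1: "card B1 = card Lam1"
    and o1: "\<forall>\<phi>\<in>B1. \<forall>\<psi>\<in>B1. (\<Sum>y\<in>Lam1. \<phi> y * cnj (\<psi> y)) = (if \<phi> = \<psi> then 1 else 0)"
    and p1: "\<forall>\<phi>\<in>B1. (\<forall>y. y \<notin> Lam1 \<longrightarrow> \<phi> y = 0) \<and> (\<exists>E. \<forall>y\<in>Lam1. ham_restr lam V U Lam1 \<phi> y = E * \<phi> y) \<and> m_localizing_fun \<tau> L m Lam1 \<phi>"
    using E1 unfolding m_localizing_cube_def Let_def Lam1_def[symmetric] by blast
  obtain B2 where cB2: "card B2 = card Lam2"
    and o2: "\<forall>\<phi>\<in>B2. \<forall>\<psi>\<in>B2. (\<Sum>y\<in>Lam2. \<phi> y * cnj (\<psi> y)) = (if \<phi> = \<psi> then 1 else 0)"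
    and p2: "\<forall>\<phi>\<in>B2. (\<forall>y. y \<notin> Lam2 \<longrightarrow> \<phi> y = 0) \<and> (\<exists>E. \<forall>y\<in>Lam2. ham_restr lam V U Lam2 \<phi> y = E * \<phi> y) \<and> m_localizing_fun \<tau> L m Lam2 \<phi>"
    using E2 unfolding m_localizing_cube_def Let_def Lam2_def[symmetric] by blast
  define Ix where "Ix = JJ \<times> B1 \<times> B2"
  define Tf where "Tf = (\<lambda>(J, f, g). TT J f g)"
  have ip: "(\<Sum>y\<in>Lam. Tf i y * cnj (Tf i' y)) = (if i = i' then 1 else 0)" if ii: "i \<in> Ix" "i' \<in> Ix" for i i'
  proof -
    obtain J f g where i: "i = (J,f,g)" "J \<in> JJ" "f \<in> B1" "g \<in> B2" using ii(1) Ix_def by auto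
    obtain K f' g' where i': "i' = (K,f',g')" "K \<in> JJ" "f' \<in> B1" "g' \<in> B2" using ii(2) Ix_def by auto
    show ?thesis using TT_ip[OF i(2) i'(2), of f g f' g'] o1 o2 i i' by (auto simp: Tf_def)
  qed
  have inj: "inj_on Tf Ix"
  proof (rule inj_onI)
    fix i i' assume ii: "i \<in> Ix" "i' \<in> Ix" "Tf i = Tf i'"
    then have "(\<Sum>y\<in>Lam. Tf i y * cnj (Tf i' y)) = 1" using ip[of i i] by simp
    then show "i = i'" using ip[OF ii(1,2)] by (auto split: if_splits)
  qed
  define B where "B = Tf ` Ix"
  have cardB: "card B = card Lam"
    using card_image[OF inj] cB1 cB2 card_Lam by (simp add: B_def Ix_def card_cartesian_product)
  have orth: "(\<Sum>y\<in>Lam. \<phi> y * cnj (\<psi> y)) = (if \<phi> = \<psi> then 1 else 0)" if pp: "\<phi> \<in> B" "\<psi> \<in> B" for \<phi> \<psi>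
  proof -
    obtain i where i: "i \<in> Ix" "\<phi> = Tf i" using pp(1) B_def by auto
    obtain i' where i': "i' \<in> Ix" "\<psi> = Tf i'" using pp(2) B_def by auto
    have "(\<phi> = \<psi>) = (i = i')" using inj i i' by (auto simp: inj_on_def)
    then show ?thesis using ip[OF i(1) i'(1)] i i' by simp
  qed
  have props: "(\<forall>y. y \<notin> Lam \<longrightarrow> \<phi> y = 0) \<and> (\<exists>E. \<forall>y\<in>Lam. ham_restr lam V U Lam \<phi> y = E * \<phi> y) \<and> m_localizing_fun \<tau> L m Lam \<phi>"
    if pB: "\<phi> \<in> B" for \<phi>
  proof -
    obtain J f g where i: "(J,f,g) \<in> Ix" "\<phi> = TT J f g" and J: "J \<in> JJ" and f: "f \<in> B1" and g: "g \<in> B2"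
      using pB B_def Ix_def Tf_def by auto
    obtain E1 where e1: "\<forall>a\<in>Lam1. ham_restr lam V U Lam1 f a = E1 * f a" using p1 f by blast
    obtain E2 where e2: "\<forall>b\<in>Lam2. ham_restr lam V U Lam2 g b = E2 * g b" using p2 g by blast
    obtain c1 where c1: "c1 \<in> Lam1" "localizing_at \<tau> L m Lam1 f c1" using p1 f by (auto simp: m_localizing_fun_def)
    obtain c2 where c2: "c2 \<in> Lam2" "localizing_at \<tau> L m Lam2 g c2" using p2 g by (auto simp: m_localizing_fun_def)
    have z: "\<forall>y. y \<notin> Lam \<longrightarrow> \<phi> y = 0" using i by (simp add: TT_def)
    have eig: "\<exists>E. \<forall>y\<in>Lam. ham_restr lam V U Lam \<phi> y = E * \<phi> y"
      using TT_eig[OF J e1 e2] i by blast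
    have nrm: "sqrt (\<Sum>y\<in>Lam. (cmod (\<phi> y))\<^sup>2) = 1"
      using ip[OF i(1) i(1)] i by (intro norm_from_ip) (simp add: Tf_def)
    have "localizing_at \<tau> L m Lam \<phi> (mrg N J c1 c2)"
      unfolding localizing_at_def using nrm TT_loc[OF J m0 c1 c2] i by auto
    then have "m_localizing_fun \<tau> L m Lam \<phi>"
      using mrg_Lam[OF c1(1) c2(1) J] by (auto simp: m_localizing_fun_def)
    then show ?thesis using z eig by blast
  qed
  show ?thesis
    unfolding m_localizing_cube_def Let_def Lam_def[symmetric]
    using cardB orth props by blast
qed

end

definition conds :: "real \<Rightarrow> real \<Rightarrow> real \<Rightarrow> real \<Rightarrow> ('d::finite site \<Rightarrow> real) \<Rightarrow> ('d site \<Rightarrow> real)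
   \<Rightarrow> 'd config set \<Rightarrow> ('d config \<times> 'd config \<Rightarrow> complex) \<Rightarrow> bool" where
  "conds \<tau> L m lam U v \<Lambda> b \<longleftrightarrow> (\<forall>y\<in>\<Lambda>.
     (\<forall>y'\<in>\<Lambda>. (\<Sum>z\<in>\<Lambda>. b (y,z) * cnj (b (y',z))) = (if y = y' then 1 else 0)) \<and>
     (\<forall>w\<in>\<Lambda>. ham_restr lam v U \<Lambda> (\<lambda>z. b (y,z)) w =
        (\<Sum>z\<in>\<Lambda>. ham_restr lam v U \<Lambda> (\<lambda>z. b (y,z)) z * cnj (b (y,z))) * b (y,w)) \<and>
     m_localizing_fun \<tau> L m \<Lambda> (\<lambda>z. b (y,z)))"

definition Kset :: "'c set \<Rightarrow> ('c \<times> 'c \<Rightarrow> complex) set" where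
  "Kset \<Lambda> = PiE UNIV (\<lambda>q. if fst q \<in> \<Lambda> \<and> snd q \<in> \<Lambda> then cball 0 1 else {0})"

definition body :: "real \<Rightarrow> real \<Rightarrow> real \<Rightarrow> real \<Rightarrow> ('d::finite site \<Rightarrow> real) \<Rightarrow> ('d site \<Rightarrow> real)
   \<Rightarrow> 'd config set \<Rightarrow> bool" where
  "body \<tau> L m lam U v \<Lambda> \<longleftrightarrow> (\<exists>B :: ('d config \<Rightarrow> complex) set.
        card B = card \<Lambda> \<and>
        (\<forall>\<phi>\<in>B. \<forall>\<psi>\<in>B. (\<Sum>y\<in>\<Lambda>. \<phi> y * cnj (\<psi> y)) = (if \<phi> = \<psi> then 1 else 0)) \<and>
        (\<forall>\<phi>\<in>B. (\<forall>y. y \<notin> \<Lambda> \<longrightarrow> \<phi> y = 0) \<and>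
                 (\<exists>E. \<forall>y\<in>\<Lambda>. ham_restr lam v U \<Lambda> \<phi> y = E * \<phi> y) \<and>
                 m_localizing_fun \<tau> L m \<Lambda> \<phi>))"

lemma mloc_body: "m_localizing_cube \<tau> m lam v U n L a \<longleftrightarrow> body \<tau> L m lam U v (cube n L a)"
  by (simp add: m_localizing_cube_def body_def Let_def)

lemma norm_le1':
  assumes "sqrt (\<Sum>y\<in>A. (cmod (g y))\<^sup>2) = 1" "finite A" "b \<in> A"
  shows "cmod (g b) \<le> 1"
proof -
  have s: "(\<Sum>y\<in>A. (cmod (g y))\<^sup>2) = 1" using assms(1) by (metis real_sqrt_eq_1_iff)
  have "(cmod (g b))\<^sup>2 \<le> (\<Sum>y\<in>A. (cmod (g y))\<^sup>2)" by (rule member_le_sum) (use assms in auto)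
  then have "(cmod (g b))\<^sup>2 \<le> 1" using s by simp
  then show ?thesis by (simp add: power_le_one_iff)
qed

lemma body_iff:
  fixes \<Lambda> :: "'d::finite config set"
  assumes fin: "finite \<Lambda>"
  shows "body \<tau> L m lam U v \<Lambda> \<longleftrightarrow> (\<exists>b\<in>Kset \<Lambda>. conds \<tau> L m lam U v \<Lambda> b)"
proof
  assume "body \<tau> L m lam U v \<Lambda>"
  then obtain B :: "('d config \<Rightarrow> complex) set" where cB: "card B = card \<Lambda>"
    and orth: "\<forall>\<phi>\<in>B. \<forall>\<psi>\<in>B. (\<Sum>y\<in>\<Lambda>. \<phi> y * cnj (\<psi> y)) = (if \<phi> = \<psi> then 1 else 0)"
    and pr: "\<forall>\<phi>\<in>B. (\<forall>y. y \<notin> \<Lambda> \<longrightarrow> \<phi> y = 0) \<and> (\<exists>E. \<forall>y\<in>\<Lambda>. ham_restr lam v U \<Lambda> \<phi> y = E * \<phi> y) \<and> m_localizing_fun \<tau> L m \<Lambda> \<phi>"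
    unfolding body_def by blast
  show "\<exists>b\<in>Kset \<Lambda>. conds \<tau> L m lam U v \<Lambda> b"
  proof (cases "\<Lambda> = {}")
    case True
    then show ?thesis by (intro bexI[of _ "\<lambda>_. 0"]) (auto simp: conds_def Kset_def)
  next
    case False
    then have "card \<Lambda> > 0" using fin by (simp add: card_gt_0_iff)
    then have finB: "finite B" using cB card_gt_0_iff by metis
    obtain h where h: "bij_betw h \<Lambda> B" using finite_same_card_bij[OF fin finB cB[symmetric]] by blast
    define b where "b q = (if fst q \<in> \<Lambda> \<and> snd q \<in> \<Lambda> then h (fst q) (snd q) else 0)" for q
    have hB: "h y \<in> B" if "y \<in> \<Lambda>" for y using h that by (auto dest: bij_betwE)
    have by_eq: "(\<lambda>z. b (y,z)) = h y" if "y \<in> \<Lambda>" for y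
      using pr hB[OF that] that by (auto simp: b_def)
    have bK: "b \<in> Kset \<Lambda>"
      unfolding Kset_def
    proof (rule PiE_I)
      fix q :: "'d config \<times> 'd config"
      show "b q \<in> (if fst q \<in> \<Lambda> \<and> snd q \<in> \<Lambda> then cball 0 1 else {0})"
      proof (cases "fst q \<in> \<Lambda> \<and> snd q \<in> \<Lambda>")
        case True
        then have "m_localizing_fun \<tau> L m \<Lambda> (h (fst q))" using pr hB by blast
        then obtain c where "localizing_at \<tau> L m \<Lambda> (h (fst q)) c" by (auto simp: m_localizing_fun_def)
        then have "cmod (h (fst q) (snd q)) \<le> 1" using True fin by (intro norm_le1'[of _ \<Lambda>]) (auto simp: localizing_at_def)
        then show ?thesis using True by (simp add: b_def)
      next
        case False
        then show ?thesis by (auto simp: b_def)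
      qed
    qed simp
    have "conds \<tau> L m lam U v \<Lambda> b"
      unfolding conds_def
    proof (rule ballI)
      fix y assume y: "y \<in> \<Lambda>"
      have A: "\<forall>y'\<in>\<Lambda>. (\<Sum>z\<in>\<Lambda>. b (y,z) * cnj (b (y',z))) = (if y = y' then 1 else 0)"
      proof
        fix y' assume y': "y' \<in> \<Lambda>"
        have "(h y = h y') = (y = y')" using h y y' by (auto simp: bij_betw_def inj_on_def)
        then show "(\<Sum>z\<in>\<Lambda>. b (y,z) * cnj (b (y',z))) = (if y = y' then 1 else 0)"
          using orth hB[OF y] hB[OF y'] y y' by (simp add: b_def)
      qed
      obtain E where E: "\<forall>w\<in>\<Lambda>. ham_restr lam v U \<Lambda> (h y) w = E * h y w" using pr hB[OF y] by blast
      have one: "(\<Sum>z\<in>\<Lambda>. h y z * cnj (h y z)) = 1" using orth hB[OF y] by simp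
      have "(\<Sum>z\<in>\<Lambda>. ham_restr lam v U \<Lambda> (h y) z * cnj (h y z)) = (\<Sum>z\<in>\<Lambda>. E * (h y z * cnj (h y z)))"
        using E by (intro sum.cong) auto
      also have "\<dots> = E" using one by (simp add: sum_distrib_left[symmetric])
      finally have EE: "(\<Sum>z\<in>\<Lambda>. ham_restr lam v U \<Lambda> (h y) z * cnj (h y z)) = E" .
      have B: "\<forall>w\<in>\<Lambda>. ham_restr lam v U \<Lambda> (\<lambda>z. b (y,z)) w =
        (\<Sum>z\<in>\<Lambda>. ham_restr lam v U \<Lambda> (\<lambda>z. b (y,z)) z * cnj (b (y,z))) * b (y,w)"
        using E EE by_eq[OF y] y by (simp add: b_def)
      have C: "m_localizing_fun \<tau> L m \<Lambda> (\<lambda>z. b (y,z))" using pr hB[OF y] by_eq[OF y] by simp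
      show "(\<forall>y'\<in>\<Lambda>. (\<Sum>z\<in>\<Lambda>. b (y,z) * cnj (b (y',z))) = (if y = y' then 1 else 0)) \<and>
     (\<forall>w\<in>\<Lambda>. ham_restr lam v U \<Lambda> (\<lambda>z. b (y,z)) w =
        (\<Sum>z\<in>\<Lambda>. ham_restr lam v U \<Lambda> (\<lambda>z. b (y,z)) z * cnj (b (y,z))) * b (y,w)) \<and>
     m_localizing_fun \<tau> L m \<Lambda> (\<lambda>z. b (y,z))" using A B C by blast
    qed
    then show ?thesis using bK by blast
  qed
next
  assume "\<exists>b\<in>Kset \<Lambda>. conds \<tau> L m lam U v \<Lambda> b"
  then obtain b where bK: "b \<in> Kset \<Lambda>" and c: "conds \<tau> L m lam U v \<Lambda> b" by blast
  define F where "F y = (\<lambda>z. b (y,z))" for y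
  have orth: "(\<Sum>z\<in>\<Lambda>. F y z * cnj (F y' z)) = (if y = y' then 1 else 0)" if "y \<in> \<Lambda>" "y' \<in> \<Lambda>" for y y'
    using c that by (simp add: conds_def F_def)
  have inj: "inj_on F \<Lambda>"
  proof (rule inj_onI)
    fix y y' assume yy: "y \<in> \<Lambda>" "y' \<in> \<Lambda>" "F y = F y'"
    then have "(\<Sum>z\<in>\<Lambda>. F y z * cnj (F y' z)) = 1" using orth[of y y] by simp
    then show "y = y'" using orth[OF yy(1,2)] by (auto split: if_splits)
  qed
  define B where "B = F ` \<Lambda>"
  have "card B = card \<Lambda>" using card_image[OF inj] by (simp add: B_def)
  moreover have "\<forall>\<phi>\<in>B. \<forall>\<psi>\<in>B. (\<Sum>y\<in>\<Lambda>. \<phi> y * cnj (\<psi> y)) = (if \<phi> = \<psi> then 1 else 0)"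
  proof (intro ballI)
    fix \<phi> \<psi> assume "\<phi> \<in> B" "\<psi> \<in> B"
    then obtain y y' where yy: "y \<in> \<Lambda>" "y' \<in> \<Lambda>" "\<phi> = F y" "\<psi> = F y'" by (auto simp: B_def)
    have "(\<phi> = \<psi>) = (y = y')" using inj yy by (auto simp: inj_on_def)
    then show "(\<Sum>y\<in>\<Lambda>. \<phi> y * cnj (\<psi> y)) = (if \<phi> = \<psi> then 1 else 0)" using orth[OF yy(1,2)] yy by simp
  qed
  moreover have "\<forall>\<phi>\<in>B. (\<forall>y. y \<notin> \<Lambda> \<longrightarrow> \<phi> y = 0) \<and> (\<exists>E. \<forall>y\<in>\<Lambda>. ham_restr lam v U \<Lambda> \<phi> y = E * \<phi> y) \<and> m_localizing_fun \<tau> L m \<Lambda> \<phi>"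
  proof
    fix \<phi> assume "\<phi> \<in> B"
    then obtain y where y: "y \<in> \<Lambda>" "\<phi> = F y" by (auto simp: B_def)
    have "b (y, z) = 0" if "z \<notin> \<Lambda>" for z
      using bK that unfolding Kset_def by (auto dest!: PiE_mem[where x="(y,z)"])
    then have z: "\<forall>z. z \<notin> \<Lambda> \<longrightarrow> \<phi> z = 0" using y by (simp add: F_def)
    have "\<exists>E. \<forall>w\<in>\<Lambda>. ham_restr lam v U \<Lambda> \<phi> w = E * \<phi> w"
      using c y unfolding conds_def F_def by blast
    moreover have "m_localizing_fun \<tau> L m \<Lambda> \<phi>" using c y unfolding conds_def F_def by blast
    ultimately show "(\<forall>y. y \<notin> \<Lambda> \<longrightarrow> \<phi> y = 0) \<and> (\<exists>E. \<forall>y\<in>\<Lambda>. ham_restr lam v U \<Lambda> \<phi> y = E * \<phi> y) \<and> m_localizing_fun \<tau> L m \<Lambda> \<phi>"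
      using z by blast
  qed
  ultimately show "body \<tau> L m lam U v \<Lambda>" unfolding body_def by blast
qed

lemma cont_snd_app[continuous_intros]: "continuous_on S (\<lambda>p. snd p q)"
  by (rule continuous_on_product_then_coordinatewise[where f="\<lambda>p. snd p"]) (rule continuous_on_snd[OF continuous_on_id])

lemma cont_fst_app[continuous_intros]: "continuous_on S (\<lambda>p. fst p q)"
  by (rule continuous_on_product_then_coordinatewise[where f="\<lambda>p. fst p"]) (rule continuous_on_fst[OF continuous_on_id])

lemma cl_ball: "(\<And>y. y \<in> A \<Longrightarrow> closed {p. P y p}) \<Longrightarrow> closed {p. \<forall>y\<in>A. P y p}"
proof -
  assume h: "\<And>y. y \<in> A \<Longrightarrow> closed {p. P y p}"
  have "{p. \<forall>y\<in>A. P y p} = (\<Inter>y\<in>A. {p. P y p})" by auto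
  then show ?thesis using h by auto
qed

lemma cl_bex: "finite A \<Longrightarrow> (\<And>y. y \<in> A \<Longrightarrow> closed {p. P y p}) \<Longrightarrow> closed {p. \<exists>y\<in>A. P y p}"
proof -
  assume f: "finite A" and h: "\<And>y. y \<in> A \<Longrightarrow> closed {p. P y p}"
  have "{p. \<exists>y\<in>A. P y p} = (\<Union>y\<in>A. {p. P y p})" by auto
  then show ?thesis using h f by auto
qed

lemma cl_imp_const: "closed {p. Q p} \<Longrightarrow> closed {p. P \<longrightarrow> Q p}"
  by (cases P) auto

lemma ham_cont:
  fixes \<Lambda> :: "'d::finite config set"
  shows "continuous_on UNIV (\<lambda>p::('d site \<Rightarrow> real) \<times> ('d config \<times> 'd config \<Rightarrow> complex).
     ham_restr lam (fst p) U \<Lambda> (\<lambda>z. snd p (y,z)) w)"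
proof (cases "w \<in> \<Lambda>")
  case True
  then show ?thesis unfolding ham_restr_def pot_def
    by (simp only: if_True) (intro continuous_intros)
next
  case False
  then show ?thesis unfolding ham_restr_def by (simp add: continuous_on_const)
qed

lemma conds_closed:
  fixes \<Lambda> :: "'d::finite config set"
  assumes fin: "finite \<Lambda>"
  shows "closed {p::('d site \<Rightarrow> real) \<times> ('d config \<times> 'd config \<Rightarrow> complex). conds \<tau> L m lam U (fst p) \<Lambda> (snd p)}"
  unfolding conds_def
proof (rule cl_ball, intro closed_Collect_conj)
  fix y assume y: "y \<in> \<Lambda>"
  show "closed {p::('d site \<Rightarrow> real) \<times> ('d config \<times> 'd config \<Rightarrow> complex). \<forall>y'\<in>\<Lambda>. (\<Sum>z\<in>\<Lambda>. snd p (y, z) * cnj (snd p (y', z))) = (if y = y' then 1 else 0)}"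
    by (rule cl_ball, rule closed_Collect_eq) (intro continuous_intros)+
  show "closed {p::('d site \<Rightarrow> real) \<times> ('d config \<times> 'd config \<Rightarrow> complex). \<forall>w\<in>\<Lambda>. ham_restr lam (fst p) U \<Lambda> (\<lambda>z. snd p (y, z)) w =
             (\<Sum>z\<in>\<Lambda>. ham_restr lam (fst p) U \<Lambda> (\<lambda>z. snd p (y, z)) z * cnj (snd p (y, z))) * snd p (y, w)}"
    by (rule cl_ball, rule closed_Collect_eq) (intro continuous_intros ham_cont)+
  show "closed {p::('d site \<Rightarrow> real) \<times> ('d config \<times> 'd config \<Rightarrow> complex). m_localizing_fun \<tau> L m \<Lambda> (\<lambda>z. snd p (y, z))}"
    unfolding m_localizing_fun_def localizing_at_def
  proof (rule cl_bex[OF fin], intro closed_Collect_conj)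
    fix c
    show "closed {p::('d site \<Rightarrow> real) \<times> ('d config \<times> 'd config \<Rightarrow> complex). sqrt (\<Sum>z\<in>\<Lambda>. (cmod (snd p (y, z)))\<^sup>2) = 1}"
      by (rule closed_Collect_eq) (intro continuous_intros)+
    show "closed {p::('d site \<Rightarrow> real) \<times> ('d config \<times> 'd config \<Rightarrow> complex). \<forall>ya\<in>\<Lambda>. L powr \<tau> \<le> real_of_int (dS ya c) \<longrightarrow>
        cmod (snd p (y, ya)) \<le> exp (- m * real_of_int (dS ya c))}"
      by (rule cl_ball, rule cl_imp_const, rule closed_Collect_le) (intro continuous_intros)+
  qed
qed

lemma Kset_compact: "compact (Kset \<Lambda>)"
proof -
  have "compactin (product_topology (\<lambda>_. euclidean) UNIV) (Kset \<Lambda>)"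
    unfolding Kset_def compactin_PiE by auto
  then show ?thesis by (simp add: euclidean_product_topology)
qed

lemma body_closed:
  fixes \<Lambda> :: "'d::finite config set"
  assumes fin: "finite \<Lambda>"
  shows "closed {v. body \<tau> L m lam U v \<Lambda>}"
proof -
  define C where "C = {p::('d site \<Rightarrow> real) \<times> ('d config \<times> 'd config \<Rightarrow> complex). snd p \<in> Kset \<Lambda> \<and> conds \<tau> L m lam U (fst p) \<Lambda> (snd p)}"
  have eq: "{v. body \<tau> L m lam U v \<Lambda>} = fst ` C"
  proof (intro set_eqI iffI)
    fix v assume "v \<in> {v. body \<tau> L m lam U v \<Lambda>}"
    then obtain b where "b \<in> Kset \<Lambda>" "conds \<tau> L m lam U v \<Lambda> b" using body_iff[OF fin] by blast
    then have "(v, b) \<in> C" by (simp add: C_def)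
    then show "v \<in> fst ` C" by (metis fst_conv image_eqI)
  next
    fix v assume "v \<in> fst ` C"
    then obtain b where "(v, b) \<in> C" by auto
    then show "v \<in> {v. body \<tau> L m lam U v \<Lambda>}" using body_iff[OF fin] by (auto simp: C_def)
  qed
  have cs: "compact_space (subtopology euclidean (Kset \<Lambda>))"
    by (rule compact_space_subtopology) (simp add: Kset_compact)
  have cm: "closed_map (prod_topology euclidean (subtopology euclidean (Kset \<Lambda>))) euclidean fst"
    by (rule closed_map_fst[OF cs])
  have Ceq: "C = {p. conds \<tau> L m lam U (fst p) \<Lambda> (snd p)} \<inter> (topspace euclidean \<times> Kset \<Lambda>)"
    by (rule set_eqI) (simp add: C_def conj_commute mem_Times_iff)
  have "closedin euclidean {p::('d site \<Rightarrow> real) \<times> ('d config \<times> 'd config \<Rightarrow> complex). conds \<tau> L m lam U (fst p) \<Lambda> (snd p)}"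
    using conds_closed[OF fin] closed_closedin by blast
  then have "closedin (subtopology euclidean (topspace euclidean \<times> Kset \<Lambda>)) C"
    unfolding closedin_subtopology using Ceq by blast
  then have "closedin (subtopology (prod_topology euclidean euclidean) (topspace euclidean \<times> Kset \<Lambda>)) C"
    by (simp only: prod_topology_euclidean)
  then have "closedin (prod_topology euclidean (subtopology euclidean (Kset \<Lambda>))) C"
    by (simp add: prod_topology_subtopology(2))
  then have "closedin euclidean (fst ` C)" by (rule cm[unfolded closed_map_def, rule_format])
  then show ?thesis unfolding eq closed_closedin .
qed

lemma event_meas:
  fixes V :: "'w \<Rightarrow> 'd::finite site \<Rightarrow> real"
  assumes fin: "finite (cube n L a)" and meas: "V \<in> borel_measurable M"
  shows "{\<omega>\<in>space M. m_localizing_cube \<tau> m lam (V \<omega>) U n L a} \<in> sets M"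
proof -
  have "{\<omega>\<in>space M. m_localizing_cube \<tau> m lam (V \<omega>) U n L a} = V -` {v. body \<tau> L m lam U v (cube n L a)} \<inter> space M"
    by (auto simp: mloc_body)
  also have "\<dots> \<in> sets M"
    by (rule measurable_sets[OF meas]) (rule borel_closed[OF body_closed[OF fin]])
  finally show ?thesis .
qed

theorem proposition5p1:
  fixes M :: "'w measure"
    and \<V> :: "'w \<Rightarrow> 'd::finite site \<Rightarrow> real"
    and \<rho> :: "real \<Rightarrow> real"
    and v_max :: real
    and \<U> :: "'d site \<Rightarrow> real"
    and lam \<tau> L m :: real
    and N :: nat
    and p :: "nat \<Rightarrow> real"
    and x :: "'d config"
  assumes tau: "0 < \<tau>" "\<tau> < 1"
    and prob: "prob_space M"
    and indep: "prob_space.indep_vars M (\<lambda>_. borel) (\<lambda>u \<omega>. \<V> \<omega> u) UNIV"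
    and distr: "\<And>u. distributed M lborel (\<lambda>\<omega>. \<V> \<omega> u) (\<lambda>t. ennreal (\<rho> t))"
    and vmax: "0 < v_max"
    and rho_supp: "\<And>t. t \<notin> {0..v_max} \<Longrightarrow> \<rho> t = 0"
    and rho_bounds: "\<exists>c1 c2. 0 < c1 \<and> 0 < c2 \<and> (\<forall>t\<in>{0..v_max}. c1 \<le> \<rho> t \<and> \<rho> t \<le> c2)"
    and rho_C1: "\<exists>\<rho>'. (\<forall>t\<in>{0<..<v_max}. (\<rho> has_real_derivative \<rho>' t) (at t))
                     \<and> continuous_on {0<..<v_max} \<rho>' \<and> bounded (\<rho>' ` {0<..<v_max})"
    and U_fin: "finite {u. \<U> u \<noteq> 0}"
    and lam: "0 < lam"
    and N: "2 \<le> N"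
    and p: "\<And>n. 1 \<le> n \<Longrightarrow> n \<le> N - 1 \<Longrightarrow> 1 \<le> p n"
    and L: "2 \<le> L"
    and m: "0 < m"
    and hyp: "\<And>n. 1 \<le> n \<Longrightarrow> n \<le> N - 1 \<Longrightarrow>
        (INF x0\<in>{x0. length x0 = n}.
           measure M {\<omega>\<in>space M. m_localizing_cube \<tau> m lam (\<V> \<omega>) \<U> n L x0})
        \<ge> 1 - L powr (- p n)"
    and x: "length x = N"
    and PI: "partially_interactive \<U> N L x"
  shows "measure M {\<omega>\<in>space M. m_localizing_cube \<tau> m lam (\<V> \<omega>) \<U> N L x}
         \<ge> 1 - L powr (- ((MIN n\<in>{1..N-1}. p n) - ln 2 / ln L))"
  proof -
  from PI obtain N1 N2 S1 S2 where pi: "1 \<le> N1" "N1 < N" "1 \<le> N2" "N2 < N" "N1 + N2 = N"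
    "S1 \<inter> S2 = {}" "\<forall>a\<in>S1. \<forall>b\<in>S2. C_U \<U> \<le> site_norm (a - b)"
    "\<forall>y\<in>cube N L x. card {j. j < N \<and> y ! j \<in> S1} = N1 \<and> card {j. j < N \<and> y ! j \<in> S2} = N2"
    unfolding partially_interactive_def by blast
  interpret P: PIS \<U> N N1 N2 S1 S2 L x
    by unfold_locales (use pi x L U_fin in auto)
  interpret prob_space M by (rule prob)
  have Vm: "\<V> \<in> borel_measurable M"
    by (rule measurable_coordinatewise_then_product) (use distributed_measurable[OF distr] in simp)
  define E1 where "E1 = {\<omega>\<in>space M. m_localizing_cube \<tau> m lam (\<V> \<omega>) \<U> N1 L P.x1}"
  define E2 where "E2 = {\<omega>\<in>space M. m_localizing_cube \<tau> m lam (\<V> \<omega>) \<U> N2 L P.x2}"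
  define EN where "EN = {\<omega>\<in>space M. m_localizing_cube \<tau> m lam (\<V> \<omega>) \<U> N L x}"
  have sE1: "E1 \<in> sets M" unfolding E1_def by (rule event_meas[OF cube_finite[OF P.x1_len] Vm])
  have sE2: "E2 \<in> sets M" unfolding E2_def by (rule event_meas[OF cube_finite[OF P.x2_len] Vm])
  have sEN: "EN \<in> sets M" unfolding EN_def by (rule event_meas[OF cube_finite[OF x] Vm])
  have sub: "E1 \<inter> E2 \<subseteq> EN"
    using P.prod_event[of m \<tau> lam] m by (auto simp: E1_def E2_def EN_def)
  have bdd: "bdd_below ((\<lambda>x0. measure M {\<omega>\<in>space M. m_localizing_cube \<tau> m lam (\<V> \<omega>) \<U> n L x0}) ` {x0. length x0 = n})" for n
    by (rule bdd_belowI2[of _ 0]) simp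
  have h1: "1 - L powr (- p N1) \<le> measure M E1"
  proof -
    have "1 - L powr (- p N1) \<le> (INF x0\<in>{x0. length x0 = N1}. measure M {\<omega>\<in>space M. m_localizing_cube \<tau> m lam (\<V> \<omega>) \<U> N1 L x0})"
      using hyp[of N1] pi by simp
    also have "\<dots> \<le> measure M E1" unfolding E1_def
      by (rule cINF_lower[OF bdd]) (simp add: P.x1_len)
    finally show ?thesis .
  qed
  have h2: "1 - L powr (- p N2) \<le> measure M E2"
  proof -
    have "1 - L powr (- p N2) \<le> (INF x0\<in>{x0. length x0 = N2}. measure M {\<omega>\<in>space M. m_localizing_cube \<tau> m lam (\<V> \<omega>) \<U> N2 L x0})"
      using hyp[of N2] pi by simp
    also have "\<dots> \<le> measure M E2" unfolding E2_def
      by (rule cINF_lower[OF bdd]) (simp add: P.x2_len)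
    finally show ?thesis .
  qed
  define pm where "pm = (MIN n\<in>{1..N-1}. p n)"
  have pm1: "pm \<le> p N1" unfolding pm_def using pi by (intro Min_le) auto
  have pm2: "pm \<le> p N2" unfolding pm_def using pi by (intro Min_le) auto
  have L1: "1 \<le> L" using L by simp
  have q1: "L powr (- p N1) \<le> L powr (- pm)" using pm1 L1 by (intro powr_mono) auto
  have q2: "L powr (- p N2) \<le> L powr (- pm)" using pm2 L1 by (intro powr_mono) auto
  have lnL: "0 < ln L" using L by simp
  have two: "L powr (ln 2 / ln L) = 2"
    using lnL L by (simp add: powr_def)
  have rhs: "L powr (- (pm - ln 2 / ln L)) = 2 * L powr (- pm)"
  proof -
    have "L powr (- (pm - ln 2 / ln L)) = L powr (- pm + ln 2 / ln L)" by simp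
    also have "\<dots> = L powr (- pm) * L powr (ln 2 / ln L)" by (rule powr_add)
    finally show ?thesis using two by simp
  qed
  have fm: "E1 \<in> fmeasurable M" "E2 \<in> fmeasurable M" using sE1 sE2 by (auto simp: fmeasurable_eq_sets)
  have "measure M (E1 \<inter> E2) = measure M E1 + measure M E2 - measure M (E1 \<union> E2)"
    using measure_Un3[OF fm] by simp
  moreover have "measure M (E1 \<union> E2) \<le> 1" by (rule prob_le_1)
  ultimately have "measure M E1 + measure M E2 - 1 \<le> measure M (E1 \<inter> E2)" by linarith
  also have "\<dots> \<le> measure M EN" by (rule finite_measure_mono[OF sub sEN])
  finally have "measure M E1 + measure M E2 - 1 \<le> measure M EN" .
  then have "1 - 2 * L powr (- pm) \<le> measure M EN" using h1 h2 q1 q2 by linarith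
  then show ?thesis using rhs by (simp add: EN_def pm_def)
qed

end
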